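(* (Furstenberg–Katznelson theorem for located words.) Let $A,B$ be finite disjoint sets and $x\notin A\cup B$ a variable. Let $F$ be a finite set of reduced strings in $A$. For every coloring of $\langle(X_n(A\cup B))\rangle$ with finitely many colors, there exists a basic sequence $(w_i)$ in $\langle(X_n(B))\rangle$ such that $x$ occurs in each $w_i$ and, for all $n_0<\cdots<n_k$ and $c_0,\dots,c_k\in A\cup B$, the color of $w_{n_0}[c_0]\cdots w_{n_k}[c_k]$ depends only on $\overline{c_0\cdots c_k}$, provided $\overline{c_0\cdots c_k}\in F$.
   Context: For a set $C$ with $x\notin C$, $X_n(C)=\{n\}\times(C\cup\{x\})$. For a sequence of sets $(X_n)$, $\langle(X_n)\rangle$ is the set of finite sequences $y_1\cdots y_k$ for which there are $m_1<\cdots<m_k$ with $y_i\in X_{m_i}$ (located words); it is a partial semigroup: the product of $y_1\cdots y_k$ and $z_1\cdots z_l$ is defined iff there are $m_1<\cdots<m_k<p_1<\cdots<p_l$ with $y_i\in X_{m_i}$, $z_j\in X_{p_j}$, and then it is the concatenation. Note $\langle(X_n(B))\rangle\subseteq\langle(X_n(A\cup B))\rangle$. A sequence $(w_i)$ is basic in $\langle(X_n(B))\rangle$ if $w_{i_1}\cdots w_{i_k}$ is defined for all $i_1<\cdots<i_k$. "$x$ occurs in $w$" means some entry of $w$ is of the form $(m,x)$; for such $w$ and $c\in A\cup B\cup\{x\}$, $w[c]$ is obtained by replacing every entry $(m,x)$ by $(m,c)$. A reduced string in $A$ is a (possibly empty) sequence $a_0\cdots a_k$ of elements of $A$ with $a_i\neq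 a_{i+1}$ for all $i<k$. For a sequence $c_0\cdots c_k$ of elements of $A\cup B$, $\overline{c_0\cdots c_k}$ is the reduced string obtained by deleting all entries in $B$ and then replacing each maximal run of a repeated element of $A$ by a single occurrence of it. *)

theory Defs
  imports Main
begin

definition Xn :: "'a set \<Rightarrow> 'a \<Rightarrow> nat \<Rightarrow> (nat \<times> 'a) set" where
  "Xn C x n = {n} \<times> (C \<union> {x})"

definition located_words :: "'a set \<Rightarrow> 'a \<Rightarrow> (nat \<times> 'a) list set" where
  "located_words C x = {ys. ys \<noteq> [] \<and> (\<exists>ms. length ms = length ys \<and> sorted_wrt (<) ms \<and>
       (\<forall>i < length ys. ys ! i \<in> Xn C x (ms ! i)))}"

text \<open>A sequence (w_i) is basic in <(X_n(C))>: each w_i lies there and every product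
  w_{i_1} ... w_{i_k} (i_1 < ... < i_k) is defined, i.e. the concatenation is again located.\<close>
definition basic_seq :: "'a set \<Rightarrow> 'a \<Rightarrow> (nat \<Rightarrow> (nat \<times> 'a) list) \<Rightarrow> bool" where
  "basic_seq C x w \<longleftrightarrow> (\<forall>i. w i \<in> located_words C x) \<and>
     (\<forall>is. is \<noteq> [] \<longrightarrow> sorted_wrt (<) is \<longrightarrow> concat (map w is) \<in> located_words C x)"

definition occurs :: "'a \<Rightarrow> (nat \<times> 'a) list \<Rightarrow> bool" where
  "occurs x w \<longleftrightarrow> (\<exists>m. (m, x) \<in> set w)"

definition subst :: "'a \<Rightarrow> (nat \<times> 'a) list \<Rightarrow> 'a \<Rightarrow> (nat \<times> 'a) list" where
  "subst x w c = map (\<lambda>(m, d). if d = x then (m, c) else (m, d)) w"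

definition reduced_string :: "'a set \<Rightarrow> 'a list \<Rightarrow> bool" where
  "reduced_string A s \<longleftrightarrow> set s \<subseteq> A \<and> (\<forall>i. Suc i < length s \<longrightarrow> s ! i \<noteq> s ! Suc i)"

definition reduce :: "'a set \<Rightarrow> 'a list \<Rightarrow> 'a list" where
  "reduce B cs = remdups_adj (filter (\<lambda>c. c \<notin> B) cs)"

definition subst_prod :: "'a \<Rightarrow> (nat \<Rightarrow> (nat \<times> 'a) list) \<Rightarrow> nat list \<Rightarrow> 'a list \<Rightarrow> (nat \<times> 'a) list" where
  "subst_prod x w ns cs = concat (map2 (\<lambda>n c. subst x (w n) c) ns cs)"

end

theory Submission
  imports Defs
begin



lemma min_Zorn:
  assumes ne: "\<A> \<noteq> {}"
    and ch: "\<And>\<C>. \<C> \<noteq> {} \<Longrightarrow> subset.chain \<A> \<C> \<Longrightarrow> \<Inter>\<C> \<in> \<A>"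
  shows "\<exists>M\<in>\<A>. \<forall>X\<in>\<A>. X \<subseteq> M \<longrightarrow> X = M"
proof -
  have "\<exists>M\<in>uminus ` \<A>. \<forall>X\<in>uminus ` \<A>. M \<subseteq> X \<longrightarrow> X = M"
  proof (rule subset_Zorn_nonempty)
    show "uminus ` \<A> \<noteq> {}" using ne by auto
    fix \<C> assume c: "\<C> \<noteq> {}" "subset.chain (uminus ` \<A>) \<C>"
    have c1: "\<C> \<subseteq> uminus ` \<A>" and c2: "\<forall>X\<in>\<C>. \<forall>Y\<in>\<C>. X \<subseteq> Y \<or> Y \<subseteq> X"
      using c(2) unfolding subset_chain_def by blast+
    have "uminus ` \<C> \<subseteq> \<A>"
    proof
      fix Z assume "Z \<in> uminus ` \<C>"
      then obtain X where X: "X \<in> \<C>" "Z = - X" by blast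
      then obtain Y where "Y \<in> \<A>" "X = - Y" using c1 by blast
      then show "Z \<in> \<A>" using X by simp
    qed
    moreover have "\<forall>X\<in>uminus ` \<C>. \<forall>Y\<in>uminus ` \<C>. X \<subseteq> Y \<or> Y \<subseteq> X"
    proof (intro ballI)
      fix X Y assume "X \<in> uminus ` \<C>" "Y \<in> uminus ` \<C>"
      then obtain X' Y' where "X' \<in> \<C>" "Y' \<in> \<C>" "X = - X'" "Y = - Y'" by blast
      then show "X \<subseteq> Y \<or> Y \<subseteq> X" using c2 by auto
    qed
    ultimately have "subset.chain \<A> (uminus ` \<C>)" unfolding subset_chain_def by blast
    moreover have "uminus ` \<C> \<noteq> {}" using c(1) by simp
    ultimately have "\<Inter>(uminus ` \<C>) \<in> \<A>" by (rule ch[rotated])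
    moreover have "\<Union>\<C> = - \<Inter>(uminus ` \<C>)" by auto
    ultimately show "\<Union>\<C> \<in> uminus ` \<A>" by (metis image_eqI)
  qed
  then obtain M0 where M0: "M0 \<in> uminus ` \<A>" "\<forall>X\<in>uminus ` \<A>. M0 \<subseteq> X \<longrightarrow> X = M0" by blast
  then obtain M where M: "M \<in> \<A>" "M0 = - M" by blast
  show ?thesis
  proof (rule bexI[OF _ M(1)], intro ballI impI)
    fix X assume X: "X \<in> \<A>" "X \<subseteq> M"
    then have "- X \<in> uminus ` \<A>" by blast
    moreover have "M0 \<subseteq> - X" using X(2) M(2) by blast
    ultimately have "- X = M0" using M0(2) by blast
    then show "X = M" using M(2) by simp
  qed
qed

definition ultra :: "'b set set \<Rightarrow> bool" where
 "ultra U \<longleftrightarrow> UNIV \<in> U \<and> {} \<notin> U \<and> (\<forall>E F. E \<in> U \<longrightarrow> E \<subseteq> F \<longrightarrow> F \<in> U) \<and>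
    (\<forall>E F. E \<in> U \<longrightarrow> F \<in> U \<longrightarrow> E \<inter> F \<in> U) \<and> (\<forall>E. E \<in> U \<or> - E \<in> U)"

lemma ultra_compl: assumes "ultra U" shows "(- E \<in> U) \<longleftrightarrow> E \<notin> U"
proof
  assume a: "- E \<in> U"
  show "E \<notin> U"
  proof
    assume "E \<in> U"
    then have "E \<inter> - E \<in> U" using a assms unfolding ultra_def by blast
    then show False using assms unfolding ultra_def by simp
  qed
next
  assume "E \<notin> U" then show "- E \<in> U" using assms unfolding ultra_def by blast
qed

lemma ultra_mono: "ultra U \<Longrightarrow> E \<in> U \<Longrightarrow> E \<subseteq> F \<Longrightarrow> F \<in> U"
  unfolding ultra_def by blast

lemma ultra_Int: "ultra U \<Longrightarrow> E \<in> U \<Longrightarrow> F \<in> U \<Longrightarrow> E \<inter> F \<in> U"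
  unfolding ultra_def by blast

lemma ultra_Int_iff: "ultra U \<Longrightarrow> E \<inter> F \<in> U \<longleftrightarrow> E \<in> U \<and> F \<in> U"
  by (meson inf_le1 inf_le2 ultra_Int ultra_mono)

lemma ultra_empty: "ultra U \<Longrightarrow> {} \<notin> U" unfolding ultra_def by blast
lemma ultra_UNIV: "ultra U \<Longrightarrow> UNIV \<in> U" unfolding ultra_def by blast

lemma ultra_nonempty: "ultra U \<Longrightarrow> E \<in> U \<Longrightarrow> \<exists>y. y \<in> E"
  using ultra_empty by (metis ex_in_conv)

lemma ultra_Inter_finite: assumes u: "ultra U" shows "finite G \<Longrightarrow> G \<subseteq> U \<Longrightarrow> \<Inter>G \<in> U"
  by (induction G rule: finite_induct) (auto simp: ultra_UNIV[OF u] ultra_Int[OF u])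

lemma ultra_INT_finite: "ultra U \<Longrightarrow> finite I \<Longrightarrow> (\<And>i. i \<in> I \<Longrightarrow> X i \<in> U) \<Longrightarrow> (\<Inter>i\<in>I. X i) \<in> U"
  using ultra_Inter_finite[of U "X ` I"] by auto

lemma ultra_UN_finite: "ultra U \<Longrightarrow> finite I \<Longrightarrow> (\<Union>i\<in>I. X i) \<in> U \<Longrightarrow> \<exists>i\<in>I. X i \<in> U"
proof (rule ccontr)
  assume u: "ultra U" "finite I" "(\<Union>i\<in>I. X i) \<in> U" "\<not> (\<exists>i\<in>I. X i \<in> U)"
  then have "\<forall>i\<in>I. - X i \<in> U" using ultra_compl[OF u(1)] by blast
  then have "(\<Inter>i\<in>I. - X i) \<in> U" using ultra_INT_finite[OF u(1) u(2), of "\<lambda>i. - X i"] by blast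
  with u(3) have "(\<Union>i\<in>I. X i) \<inter> (\<Inter>i\<in>I. - X i) \<in> U" using u(1) ultra_Int by blast
  moreover have "(\<Union>i\<in>I. X i) \<inter> (\<Inter>i\<in>I. - X i) = {}" by blast
  ultimately show False using ultra_empty[OF u(1)] by simp
qed

definition fip :: "'b set set \<Rightarrow> bool" where
  "fip G \<longleftrightarrow> (\<forall>H. finite H \<longrightarrow> H \<subseteq> G \<longrightarrow> \<Inter>H \<noteq> {})"

lemma fip_mono: "fip G \<Longrightarrow> H \<subseteq> G \<Longrightarrow> fip H"
  unfolding fip_def by blast

lemma ultrafilter_lemma:
  assumes "fip \<F>"
  shows "\<exists>U. ultra U \<and> \<F> \<subseteq> U"
proof -
  let ?A = "{G. \<F> \<subseteq> G \<and> fip G}"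
  have "\<exists>M\<in>?A. \<forall>X\<in>?A. M \<subseteq> X \<longrightarrow> X = M"
  proof (rule subset_Zorn_nonempty)
    show "?A \<noteq> {}" using assms by auto
    fix C assume c: "C \<noteq> {}" "subset.chain ?A C"
    have "fip (\<Union>C)" unfolding fip_def
    proof (intro allI impI)
      fix H assume h: "finite H" "H \<subseteq> \<Union>C"
      show "\<Inter>H \<noteq> {}"
      proof (cases "H = {}")
        case True then show ?thesis by simp
      next
        case False
        from h have "\<forall>E\<in>H. \<exists>G\<in>C. E \<in> G" by blast
        then obtain f where f: "\<forall>E\<in>H. f E \<in> C \<and> E \<in> f E" by metis
        have fin: "finite (f ` H)" using h by auto
        have ch: "subset.chain ?A (f ` H)" using c(2) f unfolding subset_chain_def by blast
        have "\<Union>(f ` H) \<in> f ` H" using Union_in_chain[OF fin _ ch] False by auto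
        then obtain G where G: "G \<in> C" "\<forall>E\<in>H. E \<in> G" using f by blast
        then have "fip G" using c(2) unfolding subset_chain_def by blast
        then show ?thesis using G h unfolding fip_def by blast
      qed
    qed
    then show "\<Union>C \<in> ?A" using c unfolding subset_chain_def by blast
  qed
  then obtain M where M: "\<F> \<subseteq> M" "fip M" "\<forall>X. \<F> \<subseteq> X \<and> fip X \<longrightarrow> M \<subseteq> X \<longrightarrow> X = M" by auto
  have ins: "E \<in> M" if "fip (insert E M)" for E
    using M(3)[rule_format, of "insert E M"] M(1) that by blast
  have fin_ins: "fip (insert E M)" if "\<forall>H. finite H \<longrightarrow> H \<subseteq> M \<longrightarrow> \<Inter>H \<inter> E \<noteq> {}" for E
    unfolding fip_def
  proof (intro allI impI)
    fix H assume h: "finite H" "H \<subseteq> insert E M"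
    have "finite (H - {E})" "H - {E} \<subseteq> M" using h by auto
    then have "\<Inter>(H - {E}) \<inter> E \<noteq> {}" using that[rule_format, of "H - {E}"] by simp
    moreover have "\<Inter>(H - {E}) \<inter> E \<subseteq> \<Inter>H" by blast
    ultimately show "\<Inter>H \<noteq> {}" by blast
  qed
  have fM: "\<And>H. finite H \<Longrightarrow> H \<subseteq> M \<Longrightarrow> \<Inter>H \<noteq> {}" using M(2) unfolding fip_def by blast
  have uM: "ultra M" unfolding ultra_def
  proof (intro conjI allI impI)
    show "UNIV \<in> M" by (rule ins, rule fin_ins) (use fM in auto)
    show "{} \<notin> M" using fM[of "{{}}"] by auto
    fix E F
    { assume "E \<in> M" "E \<subseteq> F"
      then show "F \<in> M"
        apply (intro ins fin_ins allI impI)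
        subgoal for H using fM[of "insert E H"] by auto
        done }
    { assume "E \<in> M" "F \<in> M"
      then show "E \<inter> F \<in> M"
        apply (intro ins fin_ins allI impI)
        subgoal for H using fM[of "insert E (insert F H)"] by auto
        done }
  next
    fix E
    show "E \<in> M \<or> - E \<in> M"
    proof (rule ccontr)
      assume n: "\<not> (E \<in> M \<or> - E \<in> M)"
      have "\<not> (\<forall>H. finite H \<longrightarrow> H \<subseteq> M \<longrightarrow> \<Inter>H \<inter> E \<noteq> {})"
      proof
        assume "\<forall>H. finite H \<longrightarrow> H \<subseteq> M \<longrightarrow> \<Inter>H \<inter> E \<noteq> {}"
        then have "E \<in> M" by (intro ins fin_ins)
        then show False using n by simp
      qed
      then obtain H1 where h1: "finite H1" "H1 \<subseteq> M" "\<Inter>H1 \<inter> E = {}" by blast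
      have "\<not> (\<forall>H. finite H \<longrightarrow> H \<subseteq> M \<longrightarrow> \<Inter>H \<inter> - E \<noteq> {})"
      proof
        assume "\<forall>H. finite H \<longrightarrow> H \<subseteq> M \<longrightarrow> \<Inter>H \<inter> - E \<noteq> {}"
        then have "- E \<in> M" by (intro ins fin_ins)
        then show False using n by simp
      qed
      then obtain H2 where h2: "finite H2" "H2 \<subseteq> M" "\<Inter>H2 \<inter> - E = {}" by blast
      have "\<Inter>(H1 \<union> H2) = {}" using h1(3) h2(3) by blast
      then show False using fM[of "H1 \<union> H2"] h1 h2 by auto
    qed
  qed
  show ?thesis using uM M(1) by blast
qed




definition uprod :: "'b list set set \<Rightarrow> 'b list set set \<Rightarrow> 'b list set set" where
  "uprod P Q = {E. {u. {v. u @ v \<in> E} \<in> Q} \<in> P}"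

definition uid :: "'b list set set" where "uid = {E. [] \<in> E}"

lemma uprod_assoc: "uprod (uprod P Q) R = uprod P (uprod Q R)"
  by (simp add: uprod_def)

lemma uprod_uid_right: "uprod P uid = P"
  by (simp add: uprod_def uid_def)

lemma uprod_uid_left: "uprod uid P = P"
  by (simp add: uprod_def uid_def)

lemma ultra_uid: "ultra (uid :: 'b list set set)"
  unfolding ultra_def uid_def by auto

definition pre :: "'b list set set \<Rightarrow> 'b list set \<Rightarrow> 'b list set" where
  "pre R E = {u. {v. u @ v \<in> E} \<in> R}"

lemma uprod_pre: "E \<in> uprod S R \<longleftrightarrow> pre R E \<in> S"
  by (simp add: uprod_def pre_def)

lemma pre_Int: "ultra R \<Longrightarrow> pre R (E \<inter> F) = pre R E \<inter> pre R F"
  unfolding pre_def using ultra_Int_iff[of R] by (auto simp: Collect_conj_eq)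

lemma pre_mono: "ultra R \<Longrightarrow> E \<subseteq> F \<Longrightarrow> pre R E \<subseteq> pre R F"
  unfolding pre_def using ultra_mono[of R] by (smt (verit) Collect_mono mem_Collect_eq subset_iff)

lemma pre_Inter: "ultra R \<Longrightarrow> E \<in> G \<Longrightarrow> pre R (\<Inter>G) \<subseteq> pre R E"
  using pre_mono by (metis Inter_lower)

lemma pre_UNIV: "ultra R \<Longrightarrow> pre R UNIV = UNIV"
  unfolding pre_def by (simp add: ultra_UNIV)

lemma pre_empty: "ultra R \<Longrightarrow> pre R {} = {}"
  unfolding pre_def by (simp add: ultra_empty)

lemma pre_compl: "ultra R \<Longrightarrow> pre R (- E) = - pre R E"
  unfolding pre_def using ultra_compl[of R] by (auto simp: Collect_neg_eq)

lemma ultra_uprod: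
  assumes p: "ultra P" and q: "ultra Q"
  shows "ultra (uprod P Q)"
proof -
  have "UNIV \<in> uprod P Q" unfolding uprod_pre pre_UNIV[OF q] by (rule ultra_UNIV[OF p])
  moreover have "{} \<notin> uprod P Q" unfolding uprod_pre pre_empty[OF q] by (rule ultra_empty[OF p])
  moreover have "\<forall>E F. E \<in> uprod P Q \<longrightarrow> E \<subseteq> F \<longrightarrow> F \<in> uprod P Q"
    unfolding uprod_pre
  proof (intro allI impI)
    fix E F assume "pre Q E \<in> P" "E \<subseteq> F"
    then show "pre Q F \<in> P" using ultra_mono[OF p] pre_mono[OF q] by metis
  qed
  moreover have "\<forall>E F. E \<in> uprod P Q \<longrightarrow> F \<in> uprod P Q \<longrightarrow> E \<inter> F \<in> uprod P Q"
    unfolding uprod_pre pre_Int[OF q] using ultra_Int[OF p] by simp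
  moreover have "\<forall>E. E \<in> uprod P Q \<or> - E \<in> uprod P Q"
    unfolding uprod_pre pre_compl[OF q] using ultra_compl[OF p] by simp
  ultimately show ?thesis unfolding ultra_def by blast
qed

lemma ultra_eq: assumes "ultra U" "ultra V" "U \<subseteq> V" shows "U = V"
proof (rule subset_antisym[OF assms(3)], rule subsetI, rule ccontr)
  fix E assume "E \<in> V" "E \<notin> U"
  then have "- E \<in> U" using ultra_compl[OF assms(1)] by blast
  then have "- E \<in> V" using assms(3) by blast
  then show False using \<open>E \<in> V\<close> ultra_compl[OF assms(2)] by blast
qed

definition uclosed :: "'b set set set \<Rightarrow> bool" where
  "uclosed K \<longleftrightarrow> (\<forall>U\<in>K. ultra U) \<and> (\<forall>U. ultra U \<longrightarrow> (\<forall>E\<in>U. \<exists>V\<in>K. E \<in> V) \<longrightarrow> U \<in> K)"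

lemma compactness:
  assumes cl: "\<And>K. K \<in> \<K> \<Longrightarrow> uclosed K"
    and fi: "\<And>\<K>0. finite \<K>0 \<Longrightarrow> \<K>0 \<subseteq> \<K> \<Longrightarrow> \<exists>U. ultra U \<and> (\<forall>K\<in>\<K>0. U \<in> K)"
  shows "\<exists>U. ultra U \<and> (\<forall>K\<in>\<K>. U \<in> K)"
proof -
  define \<F> where "\<F> = {E. \<exists>\<K>0. finite \<K>0 \<and> \<K>0 \<subseteq> \<K> \<and> (\<forall>V. ultra V \<and> (\<forall>K\<in>\<K>0. V \<in> K) \<longrightarrow> E \<in> V)}"
  have "fip \<F>" unfolding fip_def
  proof (intro allI impI)
    fix H assume h: "finite H" "H \<subseteq> \<F>"
    then have "\<forall>E\<in>H. \<exists>\<K>0. finite \<K>0 \<and> \<K>0 \<subseteq> \<K> \<and> (\<forall>V. ultra V \<and> (\<forall>K\<in>\<K>0. V \<in> K) \<longrightarrow> E \<in> V)"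
      unfolding \<F>_def by blast
    then obtain g where g: "\<forall>E\<in>H. finite (g E) \<and> g E \<subseteq> \<K> \<and> (\<forall>V. ultra V \<and> (\<forall>K\<in>g E. V \<in> K) \<longrightarrow> E \<in> V)"
      by metis
    have "finite (\<Union>(g ` H))" "\<Union>(g ` H) \<subseteq> \<K>" using g h by auto
    then obtain V where V: "ultra V" "\<forall>K\<in>\<Union>(g ` H). V \<in> K" using fi by blast
    have "H \<subseteq> V" using g V by blast
    then have "\<Inter>H \<in> V" using ultra_Inter_finite[OF V(1) h(1)] by blast
    then show "\<Inter>H \<noteq> {}" using ultra_empty[OF V(1)] by auto
  qed
  then obtain U where U: "ultra U" "\<F> \<subseteq> U" using ultrafilter_lemma by blast
  have "U \<in> K" if K: "K \<in> \<K>" for K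
  proof -
    have "\<forall>E\<in>U. \<exists>V\<in>K. E \<in> V"
    proof (rule ballI, rule ccontr)
      fix E assume E: "E \<in> U" "\<not> (\<exists>V\<in>K. E \<in> V)"
      have "- E \<in> \<F>" unfolding \<F>_def
      proof (rule CollectI, rule exI[of _ "{K}"], intro conjI allI impI)
        show "finite {K}" "{K} \<subseteq> \<K>" using K by auto
        fix V assume "ultra V \<and> (\<forall>K'\<in>{K}. V \<in> K')"
        then show "- E \<in> V" using E(2) ultra_compl by blast
      qed
      then have "- E \<in> U" using U by blast
      then show False using E(1) ultra_compl[OF U(1)] by blast
    qed
    then show ?thesis using cl[OF K] U(1) unfolding uclosed_def by blast
  qed
  then show ?thesis using U(1) by blast
qed

lemma uclosed_basic: "uclosed {U. ultra U \<and> E \<in> U}"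
  unfolding uclosed_def by (auto dest: ultra_compl)

lemma uclosed_all: "uclosed {U. ultra U}"
  unfolding uclosed_def by auto

lemma uclosed_Inter: "\<K> \<noteq> {} \<Longrightarrow> (\<And>K. K \<in> \<K> \<Longrightarrow> uclosed K) \<Longrightarrow> uclosed (\<Inter>\<K>)"
  unfolding uclosed_def by (metis InterE InterI all_not_in_conv)

lemma uclosed_Int: "uclosed K \<Longrightarrow> uclosed L \<Longrightarrow> uclosed (K \<inter> L)"
  using uclosed_Inter[of "{K, L}"] by auto

lemma chain_Inter_nonempty:
  assumes ne: "\<C> \<noteq> {}" and ch: "\<forall>X\<in>\<C>. \<forall>Y\<in>\<C>. X \<subseteq> Y \<or> Y \<subseteq> X"
    and cl: "\<And>K. K \<in> \<C> \<Longrightarrow> uclosed K \<and> K \<noteq> {}"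
  shows "\<Inter>\<C> \<noteq> {}"
proof -
  have "\<exists>U. ultra U \<and> (\<forall>K\<in>\<C>. U \<in> K)"
  proof (rule compactness)
    show "uclosed K" if "K \<in> \<C>" for K using cl that by blast
    fix \<K>0 assume k: "finite \<K>0" "\<K>0 \<subseteq> \<C>"
    show "\<exists>U. ultra U \<and> (\<forall>K\<in>\<K>0. U \<in> K)"
    proof (cases "\<K>0 = {}")
      case True
      from ne obtain K where "K \<in> \<C>" by blast
      with cl obtain U where "U \<in> K" "ultra U" unfolding uclosed_def by blast
      then show ?thesis using True by blast
    next
      case False
      have "subset.chain \<C> \<K>0" using k ch unfolding subset_chain_def by blast
      then have "\<Inter>\<K>0 \<in> \<K>0" using Inter_in_chain[OF k(1) False] by blast
      then obtain U where "U \<in> \<Inter>\<K>0" using cl k(2) by blast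
      moreover have "ultra U" using \<open>\<Inter>\<K>0 \<in> \<K>0\<close> \<open>U \<in> \<Inter>\<K>0\<close> cl k(2) unfolding uclosed_def by blast
      ultimately show ?thesis by blast
    qed
  qed
  then show ?thesis by blast
qed

lemma uclosed_image:
  assumes K: "uclosed K" and R: "ultra R"
  shows "uclosed ((\<lambda>S. uprod S R) ` K)"
  unfolding uclosed_def
proof (intro conjI allI impI ballI)
  fix U assume "U \<in> (\<lambda>S. uprod S R) ` K"
  then show "ultra U" using K R ultra_uprod unfolding uclosed_def by blast
next
  fix U assume U: "ultra U" and cl: "\<forall>E\<in>U. \<exists>V\<in>(\<lambda>S. uprod S R) ` K. E \<in> V"
  define Bs where "Bs = (\<lambda>E. {W. ultra W \<and> pre R E \<in> W})"
  have "\<exists>W. ultra W \<and> (\<forall>K'\<in>insert K (Bs ` U). W \<in> K')"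
  proof (rule compactness)
    fix K' assume "K' \<in> insert K (Bs ` U)"
    then show "uclosed K'" using K uclosed_basic unfolding Bs_def by auto
  next
    fix \<K>0 assume k: "finite \<K>0" "\<K>0 \<subseteq> insert K (Bs ` U)"
    then have "\<K>0 - {K} \<subseteq> Bs ` U" "finite (\<K>0 - {K})" by auto
    then obtain G where G: "G \<subseteq> U" "finite G" "\<K>0 - {K} = Bs ` G"
      using finite_subset_image by metis
    have "\<Inter>G \<in> U" using ultra_Inter_finite[OF U G(2) G(1)] .
    then obtain V where V: "V \<in> K" "pre R (\<Inter>G) \<in> V"
      using cl uprod_pre by blast
    have uV: "ultra V" using V K unfolding uclosed_def by blast
    have "\<forall>K'\<in>\<K>0. V \<in> K'"
    proof
      fix K' assume "K' \<in> \<K>0"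
      then have "K' = K \<or> K' \<in> Bs ` G" using G(3) by blast
      then show "V \<in> K'"
      proof
        assume "K' \<in> Bs ` G"
        then obtain E where E: "E \<in> G" "K' = Bs E" by blast
        have "pre R (\<Inter>G) \<subseteq> pre R E" using pre_Inter[OF R E(1)] .
        then have "pre R E \<in> V" using ultra_mono[OF uV V(2)] by blast
        then show "V \<in> K'" unfolding E(2) Bs_def using uV by simp
      qed (use V in simp)
    qed
    then show "\<exists>W. ultra W \<and> (\<forall>K'\<in>\<K>0. W \<in> K')" using uV by blast
  qed
  then obtain W where W0: "ultra W" "\<forall>K'\<in>insert K (Bs ` U). W \<in> K'" by blast
  have W2: "W \<in> K" using W0(2) by blast
  have W3: "\<forall>E\<in>U. pre R E \<in> W"
  proof
    fix E assume "E \<in> U" then have "W \<in> Bs E" using W0(2) by blast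
    then show "pre R E \<in> W" unfolding Bs_def by simp
  qed
  note W = W0(1) W2 W3
  have "U \<subseteq> uprod W R" using W(3) uprod_pre by blast
  then have "U = uprod W R" using ultra_eq U ultra_uprod[OF W(1) R] by blast
  then show "U \<in> (\<lambda>S. uprod S R) ` K" using W(2) by blast
qed

lemma uclosed_fix:
  assumes K: "uclosed K" and R: "ultra R"
  shows "uclosed {S\<in>K. uprod S R = R}"
  unfolding uclosed_def
proof (intro conjI allI impI ballI)
  fix U assume "U \<in> {S\<in>K. uprod S R = R}" then show "ultra U" using K unfolding uclosed_def by blast
next
  fix U assume U: "ultra U" and cl: "\<forall>E\<in>U. \<exists>V\<in>{S\<in>K. uprod S R = R}. E \<in> V"
  have "\<forall>E\<in>U. \<exists>V\<in>K. E \<in> V" using cl by blast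
  then have "U \<in> K" using K[unfolded uclosed_def, THEN conjunct2, rule_format, OF U] by blast
  moreover have "R \<subseteq> uprod U R"
  proof
    fix E assume E: "E \<in> R"
    show "E \<in> uprod U R"
    proof (rule ccontr)
      assume "E \<notin> uprod U R"
      then have "- pre R E \<in> U" using ultra_compl[OF U] uprod_pre by blast
      then obtain V where "V \<in> K" "uprod V R = R" "- pre R E \<in> V" using cl by blast
      moreover have "ultra V" using \<open>V \<in> K\<close> K unfolding uclosed_def by blast
      ultimately show False using E uprod_pre ultra_compl by metis
    qed
  qed
  then have "R = uprod U R" using ultra_eq R ultra_uprod[OF U R] by blast
  ultimately show "U \<in> {S\<in>K. uprod S R = R}" by simp
qed




definition subsemi :: "'b list set set set \<Rightarrow> bool" where
  "subsemi K \<longleftrightarrow> (\<forall>P\<in>K. \<forall>Q\<in>K. uprod P Q \<in> K)"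

lemma ellis:
  assumes K: "uclosed K" "K \<noteq> {}" "subsemi K"
  shows "\<exists>P\<in>K. uprod P P = P"
proof -
  let ?A = "{L. L \<subseteq> K \<and> uclosed L \<and> L \<noteq> {} \<and> subsemi L}"
  have "\<exists>M\<in>?A. \<forall>X\<in>?A. X \<subseteq> M \<longrightarrow> X = M"
  proof (rule min_Zorn)
    show "?A \<noteq> {}" using K by blast
    fix C assume c: "C \<noteq> {}" "subset.chain ?A C"
    have cA: "C \<subseteq> ?A" and ch: "\<forall>X\<in>C. \<forall>Y\<in>C. X \<subseteq> Y \<or> Y \<subseteq> X"
      using c(2) unfolding subset_chain_def by blast+
    have "\<Inter>C \<noteq> {}"
      by (rule chain_Inter_nonempty[OF c(1) ch]) (use cA in blast)
    moreover have "uclosed (\<Inter>C)" by (rule uclosed_Inter[OF c(1)]) (use cA in blast)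
    moreover have "subsemi (\<Inter>C)" using cA unfolding subsemi_def by blast
    moreover have "\<Inter>C \<subseteq> K" using cA c(1) by blast
    ultimately show "\<Inter>C \<in> ?A" by (intro CollectI conjI)
  qed
  then obtain L where LA: "L \<in> ?A" and Lmin0: "\<forall>X\<in>?A. X \<subseteq> L \<longrightarrow> X = L" by (rule bexE)
  from LA have L: "L \<subseteq> K" "uclosed L" "L \<noteq> {}" "subsemi L" by simp_all
  have Lmin: "\<And>X. X \<in> ?A \<Longrightarrow> X \<subseteq> L \<Longrightarrow> X = L" using Lmin0 by simp
  from L(3) obtain R where R: "R \<in> L" by blast
  have uR: "ultra R" using R L(2) unfolding uclosed_def by blast
  have "(\<lambda>S. uprod S R) ` L \<in> ?A"
  proof (intro CollectI conjI)
    show "(\<lambda>S. uprod S R) ` L \<subseteq> K" using L(1,4) R unfolding subsemi_def by blast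
    show "uclosed ((\<lambda>S. uprod S R) ` L)" by (rule uclosed_image[OF L(2) uR])
    show "(\<lambda>S. uprod S R) ` L \<noteq> {}" using L(3) by blast
    show "subsemi ((\<lambda>S. uprod S R) ` L)" unfolding subsemi_def
    proof (intro ballI)
      fix P Q assume "P \<in> (\<lambda>S. uprod S R) ` L" "Q \<in> (\<lambda>S. uprod S R) ` L"
      then obtain S S' where S: "S \<in> L" "S' \<in> L" "P = uprod S R" "Q = uprod S' R" by blast
      have "uprod P Q = uprod (uprod (uprod S R) S') R" using S by (simp add: uprod_assoc)
      moreover have "uprod (uprod S R) S' \<in> L" using S R L(4) unfolding subsemi_def by blast
      ultimately show "uprod P Q \<in> (\<lambda>S. uprod S R) ` L" by blast
    qed
  qed
  moreover have "(\<lambda>S. uprod S R) ` L \<subseteq> L" using L(4) R unfolding subsemi_def by blast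
  ultimately have LR: "(\<lambda>S. uprod S R) ` L = L" using Lmin by blast
  let ?L2 = "{S\<in>L. uprod S R = R}"
  have "?L2 \<in> ?A"
  proof (intro CollectI conjI)
    show "?L2 \<subseteq> K" using L(1) by blast
    show "uclosed ?L2" by (rule uclosed_fix[OF L(2) uR])
    have "R \<in> (\<lambda>S. uprod S R) ` L" using R LR by simp
    then obtain S0 where S0: "S0 \<in> L" "R = uprod S0 R" by (rule imageE)
    then have "S0 \<in> ?L2" by simp
    then show "?L2 \<noteq> {}" by (intro notI) simp
    show "subsemi ?L2" using L(4) unfolding subsemi_def by (auto simp: uprod_assoc)
  qed
  then have "?L2 = L" using Lmin by blast
  then have "uprod R R = R" using R by blast
  then show ?thesis using R L(1) by blast
qed

lemma min_idem:
  assumes S: "uclosed S" "subsemi S" and P: "P \<in> S" "uprod P P = P"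
  obtains Q where "Q \<in> S" "uprod Q Q = Q" "uprod Q P = Q" "uprod P Q = Q"
     "\<forall>R\<in>S. uprod R R = R \<longrightarrow> uprod R Q = R \<longrightarrow> uprod Q R = R \<longrightarrow> R = Q"
     "\<forall>I. I \<subseteq> S \<longrightarrow> I \<noteq> {} \<longrightarrow> (\<forall>s\<in>S. \<forall>y\<in>I. uprod s y \<in> I \<and> uprod y s \<in> I) \<longrightarrow> Q \<in> I"
proof -
  have uP: "ultra P" using S P unfolding uclosed_def by blast
  let ?SP = "(\<lambda>s. uprod s P) ` S"
  let ?A = "{L. L \<subseteq> ?SP \<and> uclosed L \<and> L \<noteq> {} \<and> (\<forall>s\<in>S. \<forall>y\<in>L. uprod s y \<in> L)}"
  have SPS: "?SP \<subseteq> S" using S(2) P(1) unfolding subsemi_def by blast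
  have "\<exists>M\<in>?A. \<forall>X\<in>?A. X \<subseteq> M \<longrightarrow> X = M"
  proof (rule min_Zorn)
    have "?SP \<in> ?A"
    proof (intro CollectI conjI)
      show "?SP \<subseteq> ?SP" by simp
      show "uclosed ?SP" by (rule uclosed_image[OF S(1) uP])
      show "?SP \<noteq> {}" using P by blast
      show "\<forall>s\<in>S. \<forall>y\<in>?SP. uprod s y \<in> ?SP"
      proof (intro ballI)
        fix s y assume "s \<in> S" "y \<in> ?SP"
        then obtain s' where "s' \<in> S" "y = uprod s' P" by blast
        then have "uprod s y = uprod (uprod s s') P" by (simp add: uprod_assoc)
        moreover have "uprod s s' \<in> S" using \<open>s \<in> S\<close> \<open>s' \<in> S\<close> S(2) unfolding subsemi_def by blast
        ultimately show "uprod s y \<in> ?SP" by blast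
      qed
    qed
    then show "?A \<noteq> {}" by blast
    fix C assume c: "C \<noteq> {}" "subset.chain ?A C"
    have cA: "C \<subseteq> ?A" and ch: "\<forall>X\<in>C. \<forall>Y\<in>C. X \<subseteq> Y \<or> Y \<subseteq> X"
      using c(2) unfolding subset_chain_def by blast+
    have "\<Inter>C \<noteq> {}"
      by (rule chain_Inter_nonempty[OF c(1) ch]) (use cA in blast)
    moreover have "uclosed (\<Inter>C)" by (rule uclosed_Inter[OF c(1)]) (use cA in blast)
    moreover have "\<forall>s\<in>S. \<forall>y\<in>\<Inter>C. uprod s y \<in> \<Inter>C" using cA by blast
    moreover have "\<Inter>C \<subseteq> ?SP" using cA c(1) by blast
    ultimately show "\<Inter>C \<in> ?A" by (intro CollectI conjI)
  qed
  then obtain L where LA: "L \<in> ?A" and Lmin0: "\<forall>X\<in>?A. X \<subseteq> L \<longrightarrow> X = L" by (rule bexE)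
  from LA have L: "L \<subseteq> ?SP" "uclosed L" "L \<noteq> {}" and Lid: "\<forall>s\<in>S. \<forall>y\<in>L. uprod s y \<in> L"
    by simp_all
  have Lmin: "\<And>X. X \<in> ?A \<Longrightarrow> X \<subseteq> L \<Longrightarrow> X = L" using Lmin0 by simp
  have LS: "L \<subseteq> S" using L(1) SPS by blast
  have Ly: "(\<lambda>s. uprod s y) ` S = L" if y: "y \<in> L" for y
  proof -
    have uy: "ultra y" using y L(2) unfolding uclosed_def by blast
    have sub: "(\<lambda>s. uprod s y) ` S \<subseteq> L" using Lid y by blast
    have "(\<lambda>s. uprod s y) ` S \<in> ?A"
    proof (intro CollectI conjI)
      show "(\<lambda>s. uprod s y) ` S \<subseteq> ?SP" using sub L(1) by blast
      show "uclosed ((\<lambda>s. uprod s y) ` S)" by (rule uclosed_image[OF S(1) uy])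
      show "(\<lambda>s. uprod s y) ` S \<noteq> {}" using P by blast
      show "\<forall>s\<in>S. \<forall>z\<in>(\<lambda>s. uprod s y) ` S. uprod s z \<in> (\<lambda>s. uprod s y) ` S"
      proof (intro ballI)
        fix s z assume "s \<in> S" "z \<in> (\<lambda>s. uprod s y) ` S"
        then obtain s' where "s' \<in> S" "z = uprod s' y" by blast
        then have "uprod s z = uprod (uprod s s') y" by (simp add: uprod_assoc)
        moreover have "uprod s s' \<in> S" using \<open>s \<in> S\<close> \<open>s' \<in> S\<close> S(2) unfolding subsemi_def by blast
        ultimately show "uprod s z \<in> (\<lambda>s. uprod s y) ` S" by blast
      qed
    qed
    then show ?thesis using Lmin sub by blast
  qed
  have "subsemi L" unfolding subsemi_def using Lid LS by blast
  then obtain e where e: "e \<in> L" "uprod e e = e" using ellis[OF L(2) L(3)] by blast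
  obtain s0 where s0: "s0 \<in> S" "e = uprod s0 P" using e(1) L(1) by blast
  have eP: "uprod e P = e" using s0 P(2) by (metis uprod_assoc)
  define Q where "Q = uprod P e"
  have QL: "Q \<in> L" unfolding Q_def using Lid P(1) e(1) by blast
  have QQ: "uprod Q Q = Q" unfolding Q_def by (metis uprod_assoc eP e(2))
  have QP: "uprod Q P = Q" unfolding Q_def by (metis uprod_assoc eP)
  have PQ: "uprod P Q = Q" unfolding Q_def by (metis uprod_assoc P(2))
  have minQ: "\<forall>R\<in>S. uprod R R = R \<longrightarrow> uprod R Q = R \<longrightarrow> uprod Q R = R \<longrightarrow> R = Q"
  proof (intro ballI impI)
    fix R assume R: "R \<in> S" "uprod R R = R" "uprod R Q = R" "uprod Q R = R"
    have "R \<in> L" using Lid R(1) QL R(3) by metis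
    then have "Q \<in> (\<lambda>s. uprod s R) ` S" using Ly QL by blast
    then obtain s where "s \<in> S" "Q = uprod s R" by blast
    then have "uprod Q R = Q" using R(2) by (metis uprod_assoc)
    then show "R = Q" using R(4) by simp
  qed
  have idQ: "\<forall>I. I \<subseteq> S \<longrightarrow> I \<noteq> {} \<longrightarrow> (\<forall>s\<in>S. \<forall>y\<in>I. uprod s y \<in> I \<and> uprod y s \<in> I) \<longrightarrow> Q \<in> I"
  proof (intro allI impI)
    fix I assume I: "I \<subseteq> S" "I \<noteq> {}" "\<forall>s\<in>S. \<forall>y\<in>I. uprod s y \<in> I \<and> uprod y s \<in> I"
    from I(2) obtain y where y: "y \<in> I" by blast
    have yQI: "uprod y Q \<in> I" using I(3) y QL LS by blast
    have yQL: "uprod y Q \<in> L" using Lid QL y I(1) by blast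
    have "Q \<in> (\<lambda>s. uprod s (uprod y Q)) ` S" using Ly[OF yQL] QL by blast
    then obtain s where "s \<in> S" "Q = uprod s (uprod y Q)" by blast
    then show "Q \<in> I" using I(3) yQI by metis
  qed
  have "Q \<in> S" using QL LS by blast
  then show ?thesis by (rule that[OF _ QQ QP PQ minQ idQ])
qed




lemma located_words_iff:
  "v \<in> located_words C x \<longleftrightarrow> v \<noteq> [] \<and> (\<forall>a\<in>set v. snd a \<in> C \<union> {x}) \<and> sorted_wrt (<) (map fst v)"
proof
  assume "v \<in> located_words C x"
  then obtain ms where ms: "v \<noteq> []" "length ms = length v" "sorted_wrt (<) ms"
    "\<forall>i<length v. v ! i \<in> Xn C x (ms ! i)" unfolding located_words_def by blast
  have "map fst v = ms" using ms(2,4) by (intro nth_equalityI) (auto simp: Xn_def)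
  moreover have "\<forall>a\<in>set v. snd a \<in> C \<union> {x}"
  proof
    fix a assume "a \<in> set v"
    then obtain i where "i < length v" "v ! i = a" by (auto simp: in_set_conv_nth)
    then have "a \<in> Xn C x (ms ! i)" using ms(4) by blast
    then show "snd a \<in> C \<union> {x}" unfolding Xn_def by auto
  qed
  ultimately show "v \<noteq> [] \<and> (\<forall>a\<in>set v. snd a \<in> C \<union> {x}) \<and> sorted_wrt (<) (map fst v)" using ms by simp
next
  assume a: "v \<noteq> [] \<and> (\<forall>a\<in>set v. snd a \<in> C \<union> {x}) \<and> sorted_wrt (<) (map fst v)"
  have "\<forall>i<length v. v ! i \<in> Xn C x (map fst v ! i)"
  proof (intro allI impI)
    fix i assume "i < length v"
    then have "v ! i \<in> set v" by simp
    then have "snd (v ! i) \<in> C \<union> {x}" using a by blast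
    then show "v ! i \<in> Xn C x (map fst v ! i)" using \<open>i < length v\<close> unfolding Xn_def
      by (cases "v ! i") auto
  qed
  then show "v \<in> located_words C x" unfolding located_words_def using a
    by (intro CollectI conjI exI[of _ "map fst v"]) auto
qed

lemma located_append:
  assumes "u \<in> located_words C x" "v \<in> located_words C x" "\<forall>a\<in>set u. \<forall>b\<in>set v. fst a < fst b"
  shows "u @ v \<in> located_words C x"
  using assms unfolding located_words_iff by (auto simp: sorted_wrt_append)

definition LWpos :: "'a set \<Rightarrow> 'a \<Rightarrow> nat \<Rightarrow> (nat \<times> 'a) list set" where
  "LWpos C x n = {v \<in> located_words C x. \<forall>a\<in>set v. n < fst a}"

definition Dset :: "'a set \<Rightarrow> 'a \<Rightarrow> (nat \<times> 'a) list set set set" where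
  "Dset C x = {U. ultra U \<and> (\<forall>n. LWpos C x n \<in> U)}"

definition img :: "'a \<Rightarrow> 'a \<Rightarrow> (nat \<times> 'a) list set set \<Rightarrow> (nat \<times> 'a) list set set" where
  "img x c P = {E. {w. subst x w c \<in> E} \<in> P}"

lemma LWpos_mono: "m \<le> n \<Longrightarrow> LWpos C x n \<subseteq> LWpos C x m"
  unfolding LWpos_def by auto

lemma uclosed_Dset: "uclosed (Dset C x)"
proof -
  have "Dset C x = \<Inter>(range (\<lambda>n. {U. ultra U \<and> LWpos C x n \<in> U}))"
    unfolding Dset_def by blast
  moreover have "uclosed (\<Inter>(range (\<lambda>n. {U. ultra U \<and> LWpos C x n \<in> U})))"
    by (rule uclosed_Inter) (auto simp: uclosed_basic)
  ultimately show ?thesis by simp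
qed

lemma pre_LWpos:
  assumes Q: "Q \<in> Dset C x"
  shows "LWpos C x n \<subseteq> pre Q (LWpos C x n)"
proof
  fix u assume u: "u \<in> LWpos C x n"
  define m where "m = Max (fst ` set u)"
  have fin: "finite (fst ` set u)" by simp
  have le: "\<forall>a\<in>set u. fst a \<le> m" unfolding m_def using fin by auto
  have ne: "u \<noteq> []" using u unfolding LWpos_def located_words_iff by blast
  have "n < m" using u ne le unfolding LWpos_def by (cases u) auto
  have "LWpos C x m \<subseteq> {v. u @ v \<in> LWpos C x n}"
  proof
    fix v assume v: "v \<in> LWpos C x m"
    have sep: "\<forall>a\<in>set u. \<forall>b\<in>set v. fst a < fst b"
    proof (intro ballI)
      fix a b assume "a \<in> set u" "b \<in> set v"
      then have "fst a \<le> m" "m < fst b" using le v unfolding LWpos_def by auto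
      then show "fst a < fst b" by simp
    qed
    have lu: "u \<in> located_words C x" and lv: "v \<in> located_words C x" using u v unfolding LWpos_def by simp_all
    have "u @ v \<in> located_words C x"
      using located_append[OF lu lv sep] .
    moreover have "\<forall>a\<in>set (u @ v). n < fst a" using u v \<open>n < m\<close> unfolding LWpos_def by auto
    ultimately show "v \<in> {v. u @ v \<in> LWpos C x n}" unfolding LWpos_def by simp
  qed
  moreover have "LWpos C x m \<in> Q" using Q unfolding Dset_def by blast
  moreover have "ultra Q" using Q unfolding Dset_def by blast
  ultimately show "u \<in> pre Q (LWpos C x n)" unfolding pre_def using ultra_mono by blast
qed

lemma subsemi_Dset: "subsemi (Dset C x)"
  unfolding subsemi_def
proof (intro ballI)
  fix P Q assume P: "P \<in> Dset C x" and Q: "Q \<in> Dset C x"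
  have uP: "ultra P" and uQ: "ultra Q" using P Q unfolding Dset_def by auto
  have "LWpos C x n \<in> uprod P Q" for n
    unfolding uprod_pre
    using ultra_mono[OF uP _ pre_LWpos[OF Q]] P unfolding Dset_def by blast
  then show "uprod P Q \<in> Dset C x" unfolding Dset_def using ultra_uprod[OF uP uQ] by blast
qed

lemma subst_append: "subst x (u @ v) c = subst x u c @ subst x v c"
  unfolding subst_def by simp

lemma img_uprod: "img x c (uprod P Q) = uprod (img x c P) (img x c Q)"
  unfolding img_def uprod_def by (simp add: subst_append)

lemma ultra_img: assumes "ultra P" shows "ultra (img x c P)"
proof -
  have e: "{w. subst x w c \<in> - E} = - {w. subst x w c \<in> E}" for E by auto
  have i: "{w. subst x w c \<in> E \<inter> F} = {w. subst x w c \<in> E} \<inter> {w. subst x w c \<in> F}" for E F by auto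
  show ?thesis unfolding ultra_def img_def
  proof (intro conjI allI impI; simp only: mem_Collect_eq e i)
    show "{w. subst x w c \<in> UNIV} \<in> P" using ultra_UNIV[OF assms] by simp
    show "{w. subst x w c \<in> {}} \<notin> P" using ultra_empty[OF assms] by simp
  next
    fix E F assume "{w. subst x w c \<in> E} \<in> P" "E \<subseteq> F"
    moreover have "{w. subst x w c \<in> E} \<subseteq> {w. subst x w c \<in> F}" using \<open>E \<subseteq> F\<close> by blast
    ultimately show "{w. subst x w c \<in> F} \<in> P" using ultra_mono[OF assms] by blast
  next
    fix E F assume "{w. subst x w c \<in> E} \<in> P" "{w. subst x w c \<in> F} \<in> P"
    then show "{w. subst x w c \<in> E} \<inter> {w. subst x w c \<in> F} \<in> P" using ultra_Int[OF assms] by blast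
  next
    fix E show "{w. subst x w c \<in> E} \<in> P \<or> - {w. subst x w c \<in> E} \<in> P"
      using ultra_compl[OF assms] by blast
  qed
qed

lemma subst_LWpos:
  assumes "v \<in> LWpos C x n" "c \<in> C'" "C \<subseteq> C'"
  shows "subst x v c \<in> LWpos C' x n"
proof -
  have mf: "map fst (subst x v c) = map fst v" unfolding subst_def by (induction v) auto
  have st: "set (subst x v c) = (\<lambda>(m, d). if d = x then (m, c) else (m, d)) ` set v"
    unfolding subst_def by simp
  have v: "v \<noteq> []" "\<forall>a\<in>set v. snd a \<in> C \<union> {x}" "sorted_wrt (<) (map fst v)" "\<forall>a\<in>set v. n < fst a"
    using assms(1) unfolding LWpos_def located_words_iff by auto
  have sn: "\<forall>a\<in>set (subst x v c). snd a \<in> C' \<union> {x} \<and> n < fst a"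
  proof
    fix a assume "a \<in> set (subst x v c)"
    then obtain m d where md: "(m, d) \<in> set v" "a = (if d = x then (m, c) else (m, d))"
      unfolding st by auto
    then have "d \<in> C \<union> {x}" "n < m" using v(2,4) by fastforce+
    then show "snd a \<in> C' \<union> {x} \<and> n < fst a" using md(2) assms(2,3) by auto
  qed
  have "subst x v c \<noteq> []" using v(1) unfolding subst_def by simp
  then show ?thesis unfolding LWpos_def located_words_iff using sn mf v(3) by simp
qed

lemma img_Dset:
  assumes "P \<in> Dset C x" "c \<in> C'" "C \<subseteq> C'"
  shows "img x c P \<in> Dset C' x"
proof -
  have uP: "ultra P" using assms unfolding Dset_def by blast
  have "LWpos C' x n \<in> img x c P" for n
  proof -
    have "LWpos C x n \<subseteq> {w. subst x w c \<in> LWpos C' x n}" using subst_LWpos[OF _ assms(2,3)] by blast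
    moreover have "LWpos C x n \<in> P" using assms(1) unfolding Dset_def by blast
    ultimately have "{w. subst x w c \<in> LWpos C' x n} \<in> P" using ultra_mono[OF uP] by blast
    then show ?thesis unfolding img_def by simp
  qed
  then show ?thesis using ultra_img[OF uP] unfolding Dset_def by blast
qed

definition noX :: "'a \<Rightarrow> (nat \<times> 'a) list set" where
  "noX x = {v. \<forall>a\<in>set v. snd a \<noteq> x}"

definition Vx :: "'a \<Rightarrow> (nat \<times> 'a) list set" where
  "Vx x = {v. occurs x v}"

lemma subst_noX: "v \<in> noX x \<Longrightarrow> subst x v c = v"
  unfolding noX_def subst_def by (induction v) auto

lemma img_fix:
  assumes P: "ultra P" "noX x \<in> P"
  shows "img x c P = P"
proof -
  have "E \<in> img x c P \<longleftrightarrow> E \<in> P" for E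
  proof -
    have "{w. subst x w c \<in> E} \<inter> noX x = E \<inter> noX x" using subst_noX by fastforce
    then have "{w. subst x w c \<in> E} \<inter> noX x \<in> P \<longleftrightarrow> E \<inter> noX x \<in> P" by simp
    then show ?thesis unfolding img_def using ultra_Int_iff[OF P(1)] P(2) by simp
  qed
  then show ?thesis by blast
qed

lemma img_uid: "img x c uid = uid"
  unfolding img_def uid_def subst_def by simp

lemma noX_subst: "c \<noteq> x \<Longrightarrow> subst x v c \<in> noX x"
  unfolding noX_def subst_def by (auto split: if_splits)

lemma uprod_Vx_left:
  assumes "ultra Q" "Vx x \<in> P" "ultra P" shows "Vx x \<in> uprod P Q"
proof -
  have "Vx x \<subseteq> pre Q (Vx x)"
  proof
    fix u assume "u \<in> Vx x"
    then have "{v. u @ v \<in> Vx x} = UNIV" unfolding Vx_def occurs_def by auto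
    then show "u \<in> pre Q (Vx x)" unfolding pre_def using ultra_UNIV[OF assms(1)] by simp
  qed
  then show ?thesis unfolding uprod_pre using ultra_mono[OF assms(3) assms(2)] by blast
qed

lemma uprod_Vx_right:
  assumes "ultra Q" "Vx x \<in> Q" "ultra P" shows "Vx x \<in> uprod P Q"
proof -
  have "pre Q (Vx x) = UNIV"
  proof -
    have "Vx x \<subseteq> {v. u @ v \<in> Vx x}" for u unfolding Vx_def occurs_def by auto
    then show ?thesis unfolding pre_def using ultra_mono[OF assms(1) assms(2)] by blast
  qed
  then show ?thesis unfolding uprod_pre using ultra_UNIV[OF assms(3)] by simp
qed

lemma uprod_noX:
  assumes "ultra Q" "noX x \<in> Q" "noX x \<in> P" "ultra P" shows "noX x \<in> uprod P Q"
proof -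
  have "noX x \<subseteq> pre Q (noX x)"
  proof
    fix u assume u: "u \<in> noX x"
    have "noX x \<subseteq> {v. u @ v \<in> noX x}" using u unfolding noX_def by auto
    then show "u \<in> pre Q (noX x)" unfolding pre_def using ultra_mono[OF assms(1) assms(2)] by blast
  qed
  then show ?thesis unfolding uprod_pre using ultra_mono[OF assms(4) assms(3)] by blast
qed

lemma exists_Dset:
  assumes "\<And>n. \<exists>v\<in>X. v \<in> LWpos C x n"
  shows "\<exists>U\<in>Dset C x. X \<in> U"
proof -
  have "fip (insert X (range (LWpos C x)))" unfolding fip_def
  proof (intro allI impI)
    fix H assume H: "finite H" "H \<subseteq> insert X (range (LWpos C x))"
    then have "H - {X} \<subseteq> LWpos C x ` UNIV" "finite (H - {X})" by auto
    then obtain Ns where Ns: "finite Ns" "H - {X} = LWpos C x ` Ns"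
      using finite_subset_image by metis
    define N where "N = Max (insert 0 Ns)"
    obtain v where v: "v \<in> X" "v \<in> LWpos C x N" using assms by blast
    have "v \<in> LWpos C x n" if "n \<in> Ns" for n
      using LWpos_mono[of n N C x] v(2) that Ns(1) unfolding N_def by auto
    then have "v \<in> \<Inter>H" using v(1) Ns(2) by blast
    then show "\<Inter>H \<noteq> {}" by blast
  qed
  then obtain U where "ultra U" "insert X (range (LWpos C x)) \<subseteq> U" using ultrafilter_lemma by blast
  then show ?thesis unfolding Dset_def by blast
qed




lemma single_LWpos: "c \<in> C \<union> {x} \<Longrightarrow> [(Suc n, c)] \<in> LWpos C x n"
  unfolding LWpos_def located_words_iff by simp

lemma ellis_E:
  assumes "uclosed K" "K \<noteq> {}" "subsemi K"
  obtains P where "P \<in> K" "uprod P P = P"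
  using ellis[OF assms] by blast

lemma exists_pq:
  assumes xB: "x \<notin> B"
  shows "\<exists>p q. ultra p \<and> q \<in> Dset B x \<and> Vx x \<in> q \<and> uprod q q = q \<and> uprod q p = q \<and>
    uprod p q = q \<and> uprod p p = p \<and> (\<forall>b\<in>B. img x b q = p) \<and> (\<forall>c. img x c p = p)"
proof -
  let ?M = "Dset B x"
  let ?KV = "Dset B x \<inter> {U. ultra U \<and> Vx x \<in> U}"
  have Mcl: "uclosed ?M" by (rule uclosed_Dset)
  have Msemi: "subsemi ?M" by (rule subsemi_Dset)
  have uM: "\<And>U. U \<in> ?M \<Longrightarrow> ultra U" unfolding Dset_def by blast
  have KVcl: "uclosed ?KV" by (rule uclosed_Int[OF uclosed_Dset uclosed_basic])
  have "\<exists>U\<in>?M. Vx x \<in> U"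
  proof (rule exists_Dset)
    fix n show "\<exists>v\<in>Vx x. v \<in> LWpos B x n"
      by (rule bexI[of _ "[(Suc n, x)]"]) (auto simp: Vx_def occurs_def intro: single_LWpos)
  qed
  then have KVne: "?KV \<noteq> {}" using uM by blast
  have KVid: "\<forall>s\<in>?M. \<forall>y\<in>?KV. uprod s y \<in> ?KV \<and> uprod y s \<in> ?KV"
  proof (intro ballI conjI)
    fix s y assume s: "s \<in> ?M" and y: "y \<in> ?KV"
    have us: "ultra s" and uy: "ultra y" using s y uM by auto
    have sy: "uprod s y \<in> ?M" "uprod y s \<in> ?M" using Msemi s y unfolding subsemi_def by auto
    have yV: "Vx x \<in> y" using y by simp
    show "uprod s y \<in> ?KV" using sy(1) uprod_Vx_right[OF uy yV us] ultra_uprod[OF us uy] by simp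
    show "uprod y s \<in> ?KV" using sy(2) uprod_Vx_left[OF us yV uy] ultra_uprod[OF uy us] by simp
  qed
  have KVsemi: "subsemi ?KV" unfolding subsemi_def using KVid by blast
  show ?thesis
  proof (cases "B = {}")
    case True
    obtain q where q: "q \<in> ?KV" "uprod q q = q" by (rule ellis_E[OF KVcl KVne KVsemi])
    show ?thesis
      by (rule exI[of _ uid], rule exI[of _ q])
        (use q True in \<open>auto simp: ultra_uid uprod_uid_left uprod_uid_right img_uid\<close>)
  next
    case False
    then obtain b0 where b0: "b0 \<in> B" by blast
    let ?T = "Dset B x \<inter> {U. ultra U \<and> noX x \<in> U}"
    have Tcl: "uclosed ?T" by (rule uclosed_Int[OF uclosed_Dset uclosed_basic])
    have "\<exists>U\<in>?M. noX x \<in> U"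
    proof (rule exists_Dset)
      fix n show "\<exists>v\<in>noX x. v \<in> LWpos B x n"
        by (rule bexI[of _ "[(Suc n, b0)]"]) (use b0 xB in \<open>auto simp: noX_def intro: single_LWpos\<close>)
    qed
    then have Tne: "?T \<noteq> {}" using uM by blast
    have Tsemi: "subsemi ?T" unfolding subsemi_def
    proof (intro ballI)
      fix P Q assume P: "P \<in> ?T" and Q: "Q \<in> ?T"
      have "uprod P Q \<in> ?M" using Msemi P Q unfolding subsemi_def by blast
      moreover have "noX x \<in> uprod P Q" using uprod_noX[of Q x P] P Q by blast
      moreover have "ultra (uprod P Q)" using ultra_uprod P Q by blast
      ultimately show "uprod P Q \<in> ?T" by simp
    qed
    obtain p0 where p0: "p0 \<in> ?T" "uprod p0 p0 = p0" by (rule ellis_E[OF Tcl Tne Tsemi])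
    obtain p where p: "p \<in> ?T" "uprod p p = p" "uprod p p0 = p" "uprod p0 p = p"
      and pmin: "\<forall>R\<in>?T. uprod R R = R \<longrightarrow> uprod R p = R \<longrightarrow> uprod p R = R \<longrightarrow> R = p"
      and "\<forall>I. I \<subseteq> ?T \<longrightarrow> I \<noteq> {} \<longrightarrow> (\<forall>s\<in>?T. \<forall>y\<in>I. uprod s y \<in> I \<and> uprod y s \<in> I) \<longrightarrow> p \<in> I"
      by (rule min_idem[OF Tcl Tsemi p0])
    have pM: "p \<in> ?M" using p(1) by simp
    obtain q where q: "q \<in> ?M" "uprod q q = q" "uprod q p = q" "uprod p q = q"
      and "\<forall>R\<in>?M. uprod R R = R \<longrightarrow> uprod R q = R \<longrightarrow> uprod q R = R \<longrightarrow> R = q"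
      and qI: "\<forall>I. I \<subseteq> ?M \<longrightarrow> I \<noteq> {} \<longrightarrow> (\<forall>s\<in>?M. \<forall>y\<in>I. uprod s y \<in> I \<and> uprod y s \<in> I) \<longrightarrow> q \<in> I"
      by (rule min_idem[OF Mcl Msemi pM p(2)])
    have KVsub: "?KV \<subseteq> ?M" by (rule Int_lower1)
    have "q \<in> ?KV" using qI[rule_format, OF KVsub KVne] KVid by blast
    then have qV: "Vx x \<in> q" by simp
    have up: "ultra p" using p(1) by simp
    have uq: "ultra q" using q uM by blast
    have imgp: "img x c p = p" for c using img_fix[OF up] p by blast
    have "img x b q = p" if b: "b \<in> B" for b
    proof -
      have "img x b q \<in> ?M" using img_Dset[OF q(1) b] by blast
      moreover have "noX x \<in> img x b q"
      proof -
        have "{w. subst x w b \<in> noX x} = UNIV" using noX_subst[of b x] b xB by auto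
        then show ?thesis unfolding img_def using ultra_UNIV[OF uq] by simp
      qed
      moreover have "ultra (img x b q)" using ultra_img[OF uq] .
      ultimately have T: "img x b q \<in> ?T" by simp
      have "uprod (img x b q) (img x b q) = img x b q" using q(2) img_uprod by metis
      moreover have "uprod (img x b q) p = img x b q" using q(3) img_uprod imgp by metis
      moreover have "uprod p (img x b q) = img x b q" using q(4) img_uprod imgp by metis
      ultimately show ?thesis using pmin T by blast
    qed
    then show ?thesis using up q qV imgp p(2) by blast
  qed
qed




lemma remdups_adj_suffix: "\<exists>pr. remdups_adj (xs @ ys) = pr @ remdups_adj ys"
proof (induction xs)
  case Nil then show ?case by simp
next
  case (Cons a xs)
  then obtain pr where pr: "remdups_adj (xs @ ys) = pr @ remdups_adj ys" by blast
  show ?case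
  proof (cases "remdups_adj (xs @ ys)")
    case Nil
    then have "remdups_adj ys = []" using pr by simp
    then show ?thesis using Nil by (simp add: remdups_adj_Cons)
  next
    case (Cons z zs)
    show ?thesis
    proof (cases "a = z")
      case True then show ?thesis using Cons pr by (simp add: remdups_adj_Cons) metis
    next
      case False
      then have "remdups_adj (a # xs @ ys) = (a # pr) @ remdups_adj ys" using Cons pr by (simp add: remdups_adj_Cons)
      then show ?thesis by auto
    qed
  qed
qed

lemma reduce_suffix: "\<exists>pr. reduce B (cs @ ds) = pr @ reduce B ds"
  unfolding reduce_def using remdups_adj_suffix by simp

lemma sp_snoc: "length ns = length cs \<Longrightarrow>
  subst_prod x f (ns @ [n]) (cs @ [c]) = subst_prod x f ns cs @ subst x (f n) c"
  unfolding subst_prod_def by simp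

lemma sp_nil: "subst_prod x f [] cs = []"
  unfolding subst_prod_def by simp

lemma sp_cong: "(\<And>i. i \<in> set ns \<Longrightarrow> f i = g i) \<Longrightarrow> subst_prod x f ns cs = subst_prod x g ns cs"
  unfolding subst_prod_def by (auto intro!: arg_cong[where f=concat] map_cong dest: set_zip_leftD)

lemma sorted_len: "sorted_wrt (<) ns \<Longrightarrow> set ns \<subseteq> {..<k} \<Longrightarrow> length ns \<le> k"
proof -
  assume a: "sorted_wrt (<) ns" "set ns \<subseteq> {..<k}"
  then have "distinct ns" using strict_sorted_iff by blast
  then have "length ns = card (set ns)" using distinct_card by metis
  also have "\<dots> \<le> card {..<k}" using a(2) by (rule card_mono[rotated]) simp
  finally show ?thesis by simp
qed

lemma split_last:
  assumes "sorted_wrt (<) ns" "set ns \<subseteq> {..<Suc k}" "k \<in> set ns"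
  shows "\<exists>ns0. ns = ns0 @ [k] \<and> sorted_wrt (<) ns0 \<and> set ns0 \<subseteq> {..<k}"
proof -
  have ne: "ns \<noteq> []" using assms(3) by auto
  define ns0 where "ns0 = butlast ns"
  define l where "l = last ns"
  have ns: "ns = ns0 @ [l]" using ne unfolding ns0_def l_def by simp
  have s: "sorted_wrt (<) ns0" "\<forall>y\<in>set ns0. y < l" using assms(1) unfolding ns by (auto simp: sorted_wrt_append)
  have "l < Suc k" using assms(2) unfolding ns by auto
  moreover have "l = k"
  proof (rule ccontr)
    assume "l \<noteq> k"
    then have "k \<in> set ns0" using assms(3) unfolding ns by auto
    then have "k < l" using s(2) by blast
    then show False using \<open>l < Suc k\<close> by simp
  qed
  ultimately have "set ns0 \<subseteq> {..<k}" using s(2) by auto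
  then show ?thesis using ns s(1) \<open>l = k\<close> by blast
qed

lemma snoc_split: "length cs = Suc n \<Longrightarrow> \<exists>cs0 c. cs = cs0 @ [c] \<and> length cs0 = n"
  by (metis append_butlast_last_id length_butlast diff_Suc_1 list.size(3) nat.distinct(1))

locale fkc =
  fixes A B :: "'a set" and x :: 'a and F :: "'a list set"
    and \<chi> :: "(nat \<times> 'a) list \<Rightarrow> nat" and r :: nat and p q :: "(nat \<times> 'a) list set set"
  assumes finA: "finite A" and finB: "finite B" and xAB: "x \<notin> A \<union> B" and finF: "finite F"
    and colr: "\<forall>v\<in>located_words (A \<union> B) x. \<chi> v < r"
    and up: "ultra p" and qD: "q \<in> Dset B x" and qV: "Vx x \<in> q" and qq: "uprod q q = q"
    and qp: "uprod q p = q" and pq: "uprod p q = q" and pp: "uprod p p = p"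
    and imgB: "\<forall>b\<in>B. img x b q = p" and imgp: "\<forall>c. img x c p = p"
begin

definition g :: "'a \<Rightarrow> (nat \<times> 'a) list set set" where "g c = img x c q"

definition rr :: "'a list \<Rightarrow> (nat \<times> 'a) list set set" where
  "rr ds = foldr (\<lambda>c P. uprod (g c) P) ds uid"

lemma rr_simps[simp]: "rr [] = uid" "rr (c # ds) = uprod (g c) (rr ds)"
  unfolding rr_def by simp_all

definition RR :: "'a list \<Rightarrow> (nat \<times> 'a) list set set" where
  "RR t = (if t = [] then p else rr t)"

lemma uq: "ultra q" using qD unfolding Dset_def by blast

lemma gg: "uprod (g c) (g c) = g c" unfolding g_def by (metis img_uprod qq)
lemma gp: "uprod (g c) p = g c" unfolding g_def by (metis img_uprod qp imgp)
lemma pg: "uprod p (g c) = g c" unfolding g_def by (metis img_uprod pq imgp)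
lemma gB: "c \<in> B \<Longrightarrow> g c = p" unfolding g_def using imgB by blast

lemma reduce_Cons: "reduce B (c # ds) =
  (if c \<in> B then reduce B ds else
    (case reduce B ds of [] \<Rightarrow> [c] | y # t \<Rightarrow> if c = y then y # t else c # y # t))"
  unfolding reduce_def by (simp add: remdups_adj_Cons)

lemma p_RR: "uprod p (RR t) = RR t"
proof (cases t)
  case Nil then show ?thesis by (simp add: RR_def pp)
next
  case (Cons y t')
  then show ?thesis by (simp add: RR_def uprod_assoc[symmetric] pg)
qed

lemma rr_reduce: "ds \<noteq> [] \<Longrightarrow> rr ds = RR (reduce B ds)"
proof (induction ds)
  case Nil then show ?case by simp
next
  case (Cons c ds)
  show ?case
  proof (cases "ds = []")
    case True
    then show ?thesis by (cases "c \<in> B") (auto simp: RR_def reduce_def uprod_uid_right gB)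
  next
    case False
    then have IH: "rr ds = RR (reduce B ds)" using Cons by simp
    show ?thesis
    proof (cases "c \<in> B")
      case True
      then show ?thesis using IH p_RR by (simp add: gB reduce_Cons)
    next
      case cB: False
      show ?thesis
      proof (cases "reduce B ds")
        case Nil
        then show ?thesis using IH cB by (simp add: reduce_Cons RR_def gp uprod_uid_right)
      next
        case (Cons y t)
        then show ?thesis using IH cB
          by (cases "c = y") (simp_all add: reduce_Cons RR_def uprod_assoc[symmetric] gg)
      qed
    qed
  qed
qed

lemma g_D: "c \<in> A \<union> B \<Longrightarrow> g c \<in> Dset (A \<union> B) x"
  unfolding g_def by (rule img_Dset[OF qD]) auto

lemma rr_D: "ds \<noteq> [] \<Longrightarrow> set ds \<subseteq> A \<union> B \<Longrightarrow> rr ds \<in> Dset (A \<union> B) x"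
proof (induction ds)
  case Nil then show ?case by simp
next
  case (Cons c ds)
  show ?case
  proof (cases "ds = []")
    case True then show ?thesis using Cons g_D by (simp add: uprod_uid_right)
  next
    case False
    then have "rr ds \<in> Dset (A \<union> B) x" using Cons by simp
    moreover have "g c \<in> Dset (A \<union> B) x" using Cons g_D by simp
    ultimately show ?thesis using subsemi_Dset[unfolded subsemi_def, rule_format] by simp
  qed
qed

definition col :: "'a list \<Rightarrow> nat" where
  "col s = (SOME k. \<exists>ds. ds \<noteq> [] \<and> set ds \<subseteq> A \<union> B \<and> reduce B ds = s \<and>
      {v \<in> located_words (A \<union> B) x. \<chi> v = k} \<in> rr ds)"

definition Cs :: "'a list \<Rightarrow> (nat \<times> 'a) list set" where
  "Cs s = {v \<in> located_words (A \<union> B) x. \<chi> v = col s}"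

lemma Cs_in:
  assumes ds: "ds \<noteq> []" "set ds \<subseteq> A \<union> B"
  shows "Cs (reduce B ds) \<in> rr ds"
proof -
  have D: "rr ds \<in> Dset (A \<union> B) x" using rr_D[OF ds] .
  then have u: "ultra (rr ds)" unfolding Dset_def by blast
  have "LWpos (A \<union> B) x 0 \<in> rr ds" using D unfolding Dset_def by blast
  then have "located_words (A \<union> B) x \<in> rr ds" using ultra_mono[OF u] unfolding LWpos_def by blast
  moreover have "located_words (A \<union> B) x = (\<Union>k\<in>{..<r}. {v \<in> located_words (A \<union> B) x. \<chi> v = k})"
    using colr by blast
  ultimately have "(\<Union>k\<in>{..<r}. {v \<in> located_words (A \<union> B) x. \<chi> v = k}) \<in> rr ds" by simp
  then obtain k where "{v \<in> located_words (A \<union> B) x. \<chi> v = k} \<in> rr ds"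
    using ultra_UN_finite[OF u finite_lessThan] by blast
  then have ex: "\<exists>k ds'. ds' \<noteq> [] \<and> set ds' \<subseteq> A \<union> B \<and> reduce B ds' = reduce B ds \<and>
      {v \<in> located_words (A \<union> B) x. \<chi> v = k} \<in> rr ds'" using ds by blast
  have "\<exists>ds'. ds' \<noteq> [] \<and> set ds' \<subseteq> A \<union> B \<and> reduce B ds' = reduce B ds \<and>
      {v \<in> located_words (A \<union> B) x. \<chi> v = col (reduce B ds)} \<in> rr ds'"
    unfolding col_def by (rule someI_ex[OF ex])
  then obtain ds' where ds': "ds' \<noteq> []" "set ds' \<subseteq> A \<union> B" "reduce B ds' = reduce B ds"
    "{v \<in> located_words (A \<union> B) x. \<chi> v = col (reduce B ds)} \<in> rr ds'"
    by (elim exE conjE)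
  have "rr ds' = rr ds" using rr_reduce[OF ds'(1)] rr_reduce[OF ds(1)] ds'(3) by simp
  then show ?thesis using ds'(4) unfolding Cs_def by simp
qed

end




context fkc begin

definition Inv :: "nat \<Rightarrow> (nat \<Rightarrow> (nat \<times> 'a) list) \<Rightarrow> bool" where
"Inv k f \<longleftrightarrow>
 (\<forall>i<k. f i \<in> located_words B x \<and> occurs x (f i)) \<and>
 (\<forall>i j. i < j \<longrightarrow> j < k \<longrightarrow> (\<forall>a\<in>set (f i). \<forall>b\<in>set (f j). fst a < fst b)) \<and>
 (\<forall>ns cs s ds. sorted_wrt (<) ns \<and> set ns \<subseteq> {..<k} \<and> length cs = length ns \<and> set cs \<subseteq> A \<union> B \<and>
    s \<in> F \<and> ds \<noteq> [] \<and> set ds \<subseteq> A \<union> B \<and> reduce B (cs @ ds) = s \<longrightarrow>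
    {v. subst_prod x f ns cs @ v \<in> Cs s} \<in> rr ds) \<and>
 (\<forall>ns cs. ns \<noteq> [] \<and> sorted_wrt (<) ns \<and> set ns \<subseteq> {..<k} \<and> length cs = length ns \<and>
    set cs \<subseteq> A \<union> B \<and> reduce B cs \<in> F \<longrightarrow> subst_prod x f ns cs \<in> Cs (reduce B cs))"

definition good :: "nat \<Rightarrow> (nat \<Rightarrow> (nat \<times> 'a) list) \<Rightarrow> (nat \<times> 'a) list \<Rightarrow> bool" where
"good k f w \<longleftrightarrow> w \<in> located_words B x \<and> occurs x w \<and>
 (\<forall>i<k. \<forall>a\<in>set (f i). \<forall>b\<in>set w. fst a < fst b) \<and>
 (\<forall>ns cs c s ds. sorted_wrt (<) ns \<and> set ns \<subseteq> {..<k} \<and> length cs = length ns \<and> set cs \<subseteq> A \<union> B \<and>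
    c \<in> A \<union> B \<and> s \<in> F \<and> ds \<noteq> [] \<and> set ds \<subseteq> A \<union> B \<and> reduce B (cs @ c # ds) = s \<longrightarrow>
    {v. subst_prod x f ns cs @ subst x w c @ v \<in> Cs s} \<in> RR (reduce B ds)) \<and>
 (\<forall>ns cs c. sorted_wrt (<) ns \<and> set ns \<subseteq> {..<k} \<and> length cs = length ns \<and> set cs \<subseteq> A \<union> B \<and>
    c \<in> A \<union> B \<and> reduce B (cs @ [c]) \<in> F \<longrightarrow>
    subst_prod x f ns cs @ subst x w c \<in> Cs (reduce B (cs @ [c])))"

lemma Inv0: "Inv 0 f"
  unfolding Inv_def
proof (intro conjI allI impI)
  fix ns :: "nat list" and cs s ds
  assume a: "sorted_wrt (<) ns \<and> set ns \<subseteq> {..<0} \<and> length cs = length ns \<and> set cs \<subseteq> A \<union> B \<and>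
    s \<in> F \<and> ds \<noteq> [] \<and> set ds \<subseteq> A \<union> B \<and> reduce B (cs @ ds) = s"
  then have "ns = []" by (cases ns) auto
  then have "cs = []" using a by simp
  then have "reduce B ds = s" using a by simp
  then have "Cs s \<in> rr ds" using Cs_in a by blast
  then show "{v. subst_prod x f ns cs @ v \<in> Cs s} \<in> rr ds" using \<open>ns = []\<close> by (simp add: sp_nil)
qed auto

lemma Inv_cong:
  assumes I: "Inv k f" and e: "\<And>i. i < k \<Longrightarrow> f i = h i"
  shows "Inv k h"
proof -
  have sp: "subst_prod x f ns cs = subst_prod x h ns cs" if "set ns \<subseteq> {..<k}" for ns cs
    by (rule sp_cong) (use e that in auto)
  show ?thesis using I unfolding Inv_def
    apply (elim conjE)
    apply (intro conjI)
    subgoal using e by simp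
    subgoal using e by simp
    subgoal using sp by simp
    subgoal using sp by simp
    done
qed

lemma good_exists:
  assumes I: "Inv k f"
  shows "\<exists>w. good k f w"
proof -
  have I3: "\<And>ns cs s ds. sorted_wrt (<) ns \<Longrightarrow> set ns \<subseteq> {..<k} \<Longrightarrow> length cs = length ns \<Longrightarrow>
      set cs \<subseteq> A \<union> B \<Longrightarrow> s \<in> F \<Longrightarrow> ds \<noteq> [] \<Longrightarrow> set ds \<subseteq> A \<union> B \<Longrightarrow> reduce B (cs @ ds) = s \<Longrightarrow>
      {v. subst_prod x f ns cs @ v \<in> Cs s} \<in> rr ds"
    using I unfolding Inv_def by blast
  define NS where "NS = {ns. set ns \<subseteq> {..<k} \<and> length ns \<le> k}"
  define CSs where "CSs = {cs. set cs \<subseteq> A \<union> B \<and> length cs \<le> k}"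
  define T0 where "T0 = (\<Union>s\<in>F. (\<lambda>i. drop i s) ` {..length s})"
  define I4 where "I4 = NS \<times> CSs \<times> (A \<union> B) \<times> F \<times> T0"
  define G4 where "G4 = (\<lambda>(ns, cs, c, s, t). {w. \<forall>ds. sorted_wrt (<) ns \<and> length cs = length ns \<and>
      ds \<noteq> [] \<and> set ds \<subseteq> A \<union> B \<and> reduce B (cs @ c # ds) = s \<and> reduce B ds = t \<longrightarrow>
      {v. subst_prod x f ns cs @ subst x w c @ v \<in> Cs s} \<in> RR t})"
  define I0 where "I0 = NS \<times> CSs \<times> (A \<union> B)"
  define G0 where "G0 = (\<lambda>(ns, cs, c). {w. sorted_wrt (<) ns \<and> length cs = length ns \<and>
      reduce B (cs @ [c]) \<in> F \<longrightarrow> subst_prod x f ns cs @ subst x w c \<in> Cs (reduce B (cs @ [c]))})"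
  have finAB: "finite (A \<union> B)" using finA finB by simp
  have fNS: "finite NS" unfolding NS_def using finite_lists_length_le[of "{..<k}" k] by simp
  have fCS: "finite CSs" unfolding CSs_def using finite_lists_length_le[OF finAB, of k] by simp
  have fT0: "finite T0" unfolding T0_def using finF by simp
  have fI4: "finite I4" unfolding I4_def using fNS fCS finAB finF fT0 by simp
  have fI0: "finite I0" unfolding I0_def using fNS fCS finAB by simp
  have G4q: "G4 i \<in> q" if i: "i \<in> I4" for i
  proof -
    obtain ns cs c s t where it: "i = (ns, cs, c, s, t)" by (cases i) auto
    have ns: "set ns \<subseteq> {..<k}" and cs: "set cs \<subseteq> A \<union> B" and c: "c \<in> A \<union> B" and s: "s \<in> F"
      using i unfolding it I4_def NS_def CSs_def by auto
    show ?thesis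
    proof (cases "\<exists>ds. sorted_wrt (<) ns \<and> length cs = length ns \<and>
      ds \<noteq> [] \<and> set ds \<subseteq> A \<union> B \<and> reduce B (cs @ c # ds) = s \<and> reduce B ds = t")
      case False
      then have "G4 i = UNIV" unfolding it G4_def by auto
      then show ?thesis using ultra_UNIV[OF uq] by simp
    next
      case True
      then obtain ds0 where d: "sorted_wrt (<) ns" "length cs = length ns" "ds0 \<noteq> []"
        "set ds0 \<subseteq> A \<union> B" "reduce B (cs @ c # ds0) = s" "reduce B ds0 = t" by blast
      define u where "u = subst_prod x f ns cs"
      define E where "E = {v. u @ v \<in> Cs s}"
      have "E \<in> rr (c # ds0)" unfolding E_def u_def
        by (rule I3[OF d(1) ns d(2) cs s]) (use d c in auto)
      then have "pre (rr ds0) E \<in> g c" by (simp add: uprod_pre)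
      moreover have "rr ds0 = RR t" using rr_reduce[OF d(3)] d(6) by simp
      ultimately have "{w. subst x w c \<in> pre (RR t) E} \<in> q" unfolding g_def img_def by simp
      moreover have "{w. subst x w c \<in> pre (RR t) E} \<subseteq> G4 i"
        unfolding it G4_def pre_def E_def u_def by auto
      ultimately show ?thesis using ultra_mono[OF uq] by blast
    qed
  qed
  have G0q: "G0 i \<in> q" if i: "i \<in> I0" for i
  proof -
    obtain ns cs c where it: "i = (ns, cs, c)" by (cases i) auto
    have ns: "set ns \<subseteq> {..<k}" and cs: "set cs \<subseteq> A \<union> B" and c: "c \<in> A \<union> B"
      using i unfolding it I0_def NS_def CSs_def by auto
    show ?thesis
    proof (cases "sorted_wrt (<) ns \<and> length cs = length ns \<and> reduce B (cs @ [c]) \<in> F")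
      case False
      then have "G0 i = UNIV" unfolding it G0_def by auto
      then show ?thesis using ultra_UNIV[OF uq] by simp
    next
      case True
      define u where "u = subst_prod x f ns cs"
      define E where "E = {v. u @ v \<in> Cs (reduce B (cs @ [c]))}"
      have "E \<in> rr [c]" unfolding E_def u_def
        by (rule I3) (use True ns cs c in auto)
      then have "E \<in> g c" by (simp add: uprod_uid_right)
      then have "{w. subst x w c \<in> E} \<in> q" unfolding g_def img_def by simp
      moreover have "{w. subst x w c \<in> E} \<subseteq> G0 i"
        unfolding it G0_def E_def u_def by auto
      ultimately show ?thesis using ultra_mono[OF uq] by blast
    qed
  qed
  define N where "N = Max (insert 0 (fst ` (\<Union>i<k. set (f i))))"
  have finN: "finite (insert 0 (fst ` (\<Union>i<k. set (f i))))" by simp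
  have Nle: "fst a \<le> N" if "i < k" "a \<in> set (f i)" for i a
    unfolding N_def using that Max_ge[OF finN] by blast
  have "LWpos B x N \<in> q" using qD unfolding Dset_def by blast
  moreover have "(\<Inter>i\<in>I4. G4 i) \<in> q" using ultra_INT_finite[OF uq fI4] G4q by blast
  moreover have "(\<Inter>i\<in>I0. G0 i) \<in> q" using ultra_INT_finite[OF uq fI0] G0q by blast
  ultimately have "LWpos B x N \<inter> Vx x \<inter> (\<Inter>i\<in>I4. G4 i) \<inter> (\<Inter>i\<in>I0. G0 i) \<in> q"
    using qV ultra_Int[OF uq] by simp
  from ultra_nonempty[OF uq this]
  obtain w where w0: "w \<in> LWpos B x N \<inter> Vx x \<inter> (\<Inter>i\<in>I4. G4 i) \<inter> (\<Inter>i\<in>I0. G0 i)"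
    by (elim exE)
  have w: "w \<in> LWpos B x N" "w \<in> Vx x" "\<forall>i\<in>I4. w \<in> G4 i" "\<forall>i\<in>I0. w \<in> G0 i"
    using w0 by simp_all
  have "good k f w" unfolding good_def
  proof (intro conjI allI impI)
    show "w \<in> located_words B x" using w(1) unfolding LWpos_def by simp
    show "occurs x w" using w(2) unfolding Vx_def by simp
  next
    fix i assume "i < k"
    show "\<forall>a\<in>set (f i). \<forall>b\<in>set w. fst a < fst b"
    proof (intro ballI)
      fix a b assume "a \<in> set (f i)" "b \<in> set w"
      then have "fst a \<le> N" "N < fst b" using Nle \<open>i < k\<close> w(1) unfolding LWpos_def by auto
      then show "fst a < fst b" by simp
    qed
  next
    fix ns cs c s ds
    assume a: "sorted_wrt (<) ns \<and> set ns \<subseteq> {..<k} \<and> length cs = length ns \<and> set cs \<subseteq> A \<union> B \<and>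
      c \<in> A \<union> B \<and> s \<in> F \<and> ds \<noteq> [] \<and> set ds \<subseteq> A \<union> B \<and> reduce B (cs @ c # ds) = s"
    have lk: "length ns \<le> k" using sorted_len a by blast
    obtain pr where pr: "reduce B ((cs @ [c]) @ ds) = pr @ reduce B ds" using reduce_suffix by blast
    then have pr: "reduce B (cs @ c # ds) = pr @ reduce B ds" by simp
    have "reduce B ds = drop (length pr) s" using pr a by simp
    moreover have "length pr \<le> length s" using pr a by auto
    ultimately have "reduce B ds \<in> T0" unfolding T0_def using a by blast
    then have "(ns, cs, c, s, reduce B ds) \<in> I4" unfolding I4_def NS_def CSs_def using a lk by auto
    then have "w \<in> G4 (ns, cs, c, s, reduce B ds)" using w(3) by blast
    then show "{v. subst_prod x f ns cs @ subst x w c @ v \<in> Cs s} \<in> RR (reduce B ds)"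
      unfolding G4_def using a by auto
  next
    fix ns cs c
    assume a: "sorted_wrt (<) ns \<and> set ns \<subseteq> {..<k} \<and> length cs = length ns \<and> set cs \<subseteq> A \<union> B \<and>
      c \<in> A \<union> B \<and> reduce B (cs @ [c]) \<in> F"
    have lk: "length ns \<le> k" using sorted_len a by blast
    then have "(ns, cs, c) \<in> I0" unfolding I0_def NS_def CSs_def using a by auto
    then have "w \<in> G0 (ns, cs, c)" using w(4) by blast
    then show "subst_prod x f ns cs @ subst x w c \<in> Cs (reduce B (cs @ [c]))"
      unfolding G0_def using a by auto
  qed
  then show ?thesis by blast
qed

end




context fkc begin

lemma Inv_step:
  assumes I: "Inv k f" and G: "good k f w"
  shows "Inv (Suc k) (f(k := w))"
proof -
  let ?f = "f(k := w)"
  have I1: "\<forall>i<k. f i \<in> located_words B x \<and> occurs x (f i)"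
    and I2: "\<forall>i j. i < j \<longrightarrow> j < k \<longrightarrow> (\<forall>a\<in>set (f i). \<forall>b\<in>set (f j). fst a < fst b)"
    and I3: "\<And>ns cs s ds. sorted_wrt (<) ns \<Longrightarrow> set ns \<subseteq> {..<k} \<Longrightarrow> length cs = length ns \<Longrightarrow>
      set cs \<subseteq> A \<union> B \<Longrightarrow> s \<in> F \<Longrightarrow> ds \<noteq> [] \<Longrightarrow> set ds \<subseteq> A \<union> B \<Longrightarrow> reduce B (cs @ ds) = s \<Longrightarrow>
      {v. subst_prod x f ns cs @ v \<in> Cs s} \<in> rr ds"
    and I4: "\<And>ns cs. ns \<noteq> [] \<Longrightarrow> sorted_wrt (<) ns \<Longrightarrow> set ns \<subseteq> {..<k} \<Longrightarrow> length cs = length ns \<Longrightarrow>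
      set cs \<subseteq> A \<union> B \<Longrightarrow> reduce B cs \<in> F \<Longrightarrow> subst_prod x f ns cs \<in> Cs (reduce B cs)"
    using I unfolding Inv_def by blast+
  have G1: "w \<in> located_words B x" "occurs x w"
    and G2: "\<forall>i<k. \<forall>a\<in>set (f i). \<forall>b\<in>set w. fst a < fst b"
    and G3: "\<And>ns cs c s ds. sorted_wrt (<) ns \<Longrightarrow> set ns \<subseteq> {..<k} \<Longrightarrow> length cs = length ns \<Longrightarrow>
      set cs \<subseteq> A \<union> B \<Longrightarrow> c \<in> A \<union> B \<Longrightarrow> s \<in> F \<Longrightarrow> ds \<noteq> [] \<Longrightarrow> set ds \<subseteq> A \<union> B \<Longrightarrow>
      reduce B (cs @ c # ds) = s \<Longrightarrow>
      {v. subst_prod x f ns cs @ subst x w c @ v \<in> Cs s} \<in> RR (reduce B ds)"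
    and G4: "\<And>ns cs c. sorted_wrt (<) ns \<Longrightarrow> set ns \<subseteq> {..<k} \<Longrightarrow> length cs = length ns \<Longrightarrow>
      set cs \<subseteq> A \<union> B \<Longrightarrow> c \<in> A \<union> B \<Longrightarrow> reduce B (cs @ [c]) \<in> F \<Longrightarrow>
      subst_prod x f ns cs @ subst x w c \<in> Cs (reduce B (cs @ [c]))"
    using G unfolding good_def by blast+
  have spo: "subst_prod x ?f ns cs = subst_prod x f ns cs" if "set ns \<subseteq> {..<k}" for ns cs
    by (rule sp_cong) (use that in auto)
  have spn: "subst_prod x ?f (ns0 @ [k]) (cs0 @ [c]) = subst_prod x f ns0 cs0 @ subst x w c"
    if h1: "set ns0 \<subseteq> {..<k}" and h2: "length cs0 = length ns0" for ns0 cs0 c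
    using sp_snoc[of ns0 cs0 x ?f k c] spo[OF h1] h2 by simp
  have split: "\<exists>ns0 cs0 c. ns = ns0 @ [k] \<and> cs = cs0 @ [c] \<and> sorted_wrt (<) ns0 \<and>
      set ns0 \<subseteq> {..<k} \<and> length cs0 = length ns0 \<and> set cs0 \<subseteq> A \<union> B \<and> c \<in> A \<union> B"
    if hh: "sorted_wrt (<) ns" "set ns \<subseteq> {..<Suc k}" "k \<in> set ns" "length cs = length ns" "set cs \<subseteq> A \<union> B"
    for ns cs
  proof -
    obtain ns0 where ns0: "ns = ns0 @ [k]" "sorted_wrt (<) ns0" "set ns0 \<subseteq> {..<k}"
      using split_last[OF hh(1,2,3)] by blast
    obtain cs0 c where cs0: "cs = cs0 @ [c]" "length cs0 = length ns0"
      using snoc_split[of cs "length ns0"] hh(4) ns0(1) by auto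
    show ?thesis using ns0 cs0 hh(5) by auto
  qed
  have old: "set ns \<subseteq> {..<k}" if "set ns \<subseteq> {..<Suc k}" "k \<notin> set ns" for ns :: "nat list"
    using that by (auto simp: less_Suc_eq)
  show ?thesis unfolding Inv_def
  proof (intro conjI allI impI)
    fix i assume "i < Suc k"
    then show "?f i \<in> located_words B x" using I1 G1 by (cases "i = k") auto
  next
    fix i assume "i < Suc k"
    then show "occurs x (?f i)" using I1 G1 by (cases "i = k") auto
  next
    fix i j assume ij: "i < j" "j < Suc k"
    show "\<forall>a\<in>set (?f i). \<forall>b\<in>set (?f j). fst a < fst b"
    proof (cases "j = k")
      case True then show ?thesis using G2 ij by simp
    next
      case False then show ?thesis using I2 ij by simp
    qed
  next
    fix ns :: "nat list" and cs s ds
    assume a: "sorted_wrt (<) ns \<and> set ns \<subseteq> {..<Suc k} \<and> length cs = length ns \<and> set cs \<subseteq> A \<union> B \<and>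
      s \<in> F \<and> ds \<noteq> [] \<and> set ds \<subseteq> A \<union> B \<and> reduce B (cs @ ds) = s"
    show "{v. subst_prod x ?f ns cs @ v \<in> Cs s} \<in> rr ds"
    proof (cases "k \<in> set ns")
      case False
      then have "set ns \<subseteq> {..<k}" using old a by blast
      then show ?thesis using spo I3 a by simp
    next
      case True
      then obtain ns0 cs0 c where sp: "ns = ns0 @ [k]" "cs = cs0 @ [c]" "sorted_wrt (<) ns0"
        "set ns0 \<subseteq> {..<k}" "length cs0 = length ns0" "set cs0 \<subseteq> A \<union> B" "c \<in> A \<union> B"
        using split a by blast
      have "{v. subst_prod x f ns0 cs0 @ subst x w c @ v \<in> Cs s} \<in> RR (reduce B ds)"
        by (rule G3[OF sp(3,4,5,6,7)]) (use a sp in auto)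
      moreover have "RR (reduce B ds) = rr ds" using rr_reduce a by simp
      ultimately show ?thesis using spn[OF sp(4,5)] sp(1,2) by simp
    qed
  next
    fix ns :: "nat list" and cs
    assume a: "ns \<noteq> [] \<and> sorted_wrt (<) ns \<and> set ns \<subseteq> {..<Suc k} \<and> length cs = length ns \<and>
      set cs \<subseteq> A \<union> B \<and> reduce B cs \<in> F"
    show "subst_prod x ?f ns cs \<in> Cs (reduce B cs)"
    proof (cases "k \<in> set ns")
      case False
      then have "set ns \<subseteq> {..<k}" using old a by blast
      then show ?thesis using spo I4 a by simp
    next
      case True
      then obtain ns0 cs0 c where sp: "ns = ns0 @ [k]" "cs = cs0 @ [c]" "sorted_wrt (<) ns0"
        "set ns0 \<subseteq> {..<k}" "length cs0 = length ns0" "set cs0 \<subseteq> A \<union> B" "c \<in> A \<union> B"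
        using split a by blast
      have "subst_prod x f ns0 cs0 @ subst x w c \<in> Cs (reduce B (cs0 @ [c]))"
        by (rule G4[OF sp(3,4,5,6,7)]) (use a sp in auto)
      then show ?thesis using spn[OF sp(4,5)] sp(1,2) by simp
    qed
  qed
qed

definition pick :: "nat \<Rightarrow> (nat \<Rightarrow> (nat \<times> 'a) list) \<Rightarrow> (nat \<times> 'a) list" where
  "pick k f = (SOME w. good k f w)"

primrec Wseq :: "nat \<Rightarrow> nat \<Rightarrow> (nat \<times> 'a) list" where
  "Wseq 0 = (\<lambda>_. [])"
| "Wseq (Suc k) = (Wseq k)(k := pick k (Wseq k))"

definition wseq :: "nat \<Rightarrow> (nat \<times> 'a) list" where "wseq i = Wseq (Suc i) i"

lemma Inv_W: "Inv k (Wseq k)"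
proof (induction k)
  case 0 then show ?case using Inv0 by simp
next
  case (Suc k)
  have "good k (Wseq k) (pick k (Wseq k))"
    unfolding pick_def using good_exists[OF Suc] by (rule someI_ex)
  then show ?case by (simp only: Wseq.simps) (rule Inv_step[OF Suc])
qed

lemma W_agree: "i < k \<Longrightarrow> Wseq k i = wseq i"
proof (induction k)
  case 0 then show ?case by simp
next
  case (Suc k)
  show ?case
  proof (cases "i = k")
    case True then show ?thesis unfolding wseq_def by simp
  next
    case False then show ?thesis using Suc by simp
  qed
qed

lemma Inv_w: "Inv k wseq"
  using Inv_cong[OF Inv_W W_agree] .

lemma w_props:
  "wseq i \<in> located_words B x" "occurs x (wseq i)"
  "i < j \<Longrightarrow> a \<in> set (wseq i) \<Longrightarrow> b \<in> set (wseq j) \<Longrightarrow> fst a < fst b"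
proof -
  show "wseq i \<in> located_words B x" "occurs x (wseq i)" using Inv_w[of "Suc i"] unfolding Inv_def by simp_all
  assume "i < j" "a \<in> set (wseq i)" "b \<in> set (wseq j)"
  then show "fst a < fst b" using Inv_w[of "Suc j"] unfolding Inv_def by blast
qed

lemma concat_located: "is \<noteq> [] \<Longrightarrow> sorted_wrt (<) is \<Longrightarrow> concat (map wseq is) \<in> located_words B x"
proof (induction "is")
  case Nil then show ?case by simp
next
  case (Cons i js)
  show ?case
  proof (cases "js = []")
    case True then show ?thesis using w_props(1) by simp
  next
    case False
    have IH: "concat (map wseq js) \<in> located_words B x" using Cons False by simp
    have sep: "\<forall>a\<in>set (wseq i). \<forall>b\<in>set (concat (map wseq js)). fst a < fst b"
    proof (intro ballI)
      fix a b assume "a \<in> set (wseq i)" "b \<in> set (concat (map wseq js))"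
      then obtain j where "j \<in> set js" "b \<in> set (wseq j)" by auto
      moreover have "i < j" using Cons.prems(2) \<open>j \<in> set js\<close> by simp
      ultimately show "fst a < fst b" using w_props(3) \<open>a \<in> set (wseq i)\<close> by blast
    qed
    show ?thesis using located_append[OF w_props(1) IH sep] by simp
  qed
qed

lemma final:
  "basic_seq B x wseq \<and> (\<forall>i. occurs x (wseq i)) \<and>
    (\<forall>ns cs ns' cs'.
        ns \<noteq> [] \<and> sorted_wrt (<) ns \<and> length cs = length ns \<and> set cs \<subseteq> A \<union> B \<and>
        ns' \<noteq> [] \<and> sorted_wrt (<) ns' \<and> length cs' = length ns' \<and> set cs' \<subseteq> A \<union> B \<and>
        reduce B cs \<in> F \<and> reduce B cs' = reduce B cs
        \<longrightarrow> \<chi> (subst_prod x wseq ns cs) = \<chi> (subst_prod x wseq ns' cs'))"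
proof (intro conjI allI impI)
  show "basic_seq B x wseq" unfolding basic_seq_def using w_props(1) concat_located by blast
  fix i show "occurs x (wseq i)" by (rule w_props(2))
next
  fix ns :: "nat list" and cs and ns' :: "nat list" and cs'
  assume a: "ns \<noteq> [] \<and> sorted_wrt (<) ns \<and> length cs = length ns \<and> set cs \<subseteq> A \<union> B \<and>
        ns' \<noteq> [] \<and> sorted_wrt (<) ns' \<and> length cs' = length ns' \<and> set cs' \<subseteq> A \<union> B \<and>
        reduce B cs \<in> F \<and> reduce B cs' = reduce B cs"
  define k where "k = Suc (Max (set ns \<union> set ns'))"
  have fin: "finite (set ns \<union> set ns')" by simp
  have "set ns \<subseteq> {..<k}" "set ns' \<subseteq> {..<k}"
    unfolding k_def using Max_ge[OF fin] by (auto simp: less_Suc_eq_le)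
  moreover have I4: "\<And>ns cs. ns \<noteq> [] \<Longrightarrow> sorted_wrt (<) ns \<Longrightarrow> set ns \<subseteq> {..<k} \<Longrightarrow> length cs = length ns \<Longrightarrow>
      set cs \<subseteq> A \<union> B \<Longrightarrow> reduce B cs \<in> F \<Longrightarrow> subst_prod x wseq ns cs \<in> Cs (reduce B cs)"
    using Inv_w[of k] unfolding Inv_def by blast
  ultimately have "subst_prod x wseq ns cs \<in> Cs (reduce B cs)" "subst_prod x wseq ns' cs' \<in> Cs (reduce B cs')"
    using a by (metis (no_types))+
  then show "\<chi> (subst_prod x wseq ns cs) = \<chi> (subst_prod x wseq ns' cs')"
    using a unfolding Cs_def by simp
qed

end

lemma mainTheorem20_aux:
  fixes A B :: "'a set" and x :: 'a and F :: "'a list set"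
    and \<chi> :: "(nat \<times> 'a) list \<Rightarrow> nat" and r :: nat
  assumes "finite A" and "finite B" and "A \<inter> B = {}" and "x \<notin> A \<union> B"
    and "finite F" and "\<forall>s\<in>F. reduced_string A s"
    and "\<forall>v\<in>located_words (A \<union> B) x. \<chi> v < r"
  shows "\<exists>w. basic_seq B x w \<and> (\<forall>i. occurs x (w i)) \<and>
    (\<forall>ns cs ns' cs'.
        ns \<noteq> [] \<and> sorted_wrt (<) ns \<and> length cs = length ns \<and> set cs \<subseteq> A \<union> B \<and>
        ns' \<noteq> [] \<and> sorted_wrt (<) ns' \<and> length cs' = length ns' \<and> set cs' \<subseteq> A \<union> B \<and>
        reduce B cs \<in> F \<and> reduce B cs' = reduce B cs
        \<longrightarrow> \<chi> (subst_prod x w ns cs) = \<chi> (subst_prod x w ns' cs'))"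
proof -
  have xB: "x \<notin> B" using assms(4) by blast
  obtain p q where pq: "ultra p" "q \<in> Dset B x" "Vx x \<in> q" "uprod q q = q" "uprod q p = q"
    "uprod p q = q" "uprod p p = p" "\<forall>b\<in>B. img x b q = p" "\<forall>c. img x c p = p"
    using exists_pq[OF xB] by (elim exE conjE)
  interpret fkc A B x F \<chi> r p q
    by (unfold_locales) (use assms pq in auto)
  show ?thesis using final by (intro exI[of _ wseq])
qed


theorem mainTheorem20:
  fixes A B :: "'a set" and x :: 'a and F :: "'a list set"
    and \<chi> :: "(nat \<times> 'a) list \<Rightarrow> nat" and r :: nat
  assumes "finite A" and "finite B" and "A \<inter> B = {}" and "x \<notin> A \<union> B"
    and "finite F" and "\<forall>s\<in>F. reduced_string A s"
    and "\<forall>v\<in>located_words (A \<union> B) x. \<chi> v < r"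
  shows "\<exists>w. basic_seq B x w \<and> (\<forall>i. occurs x (w i)) \<and>
    (\<forall>ns cs ns' cs'.
        ns \<noteq> [] \<and> sorted_wrt (<) ns \<and> length cs = length ns \<and> set cs \<subseteq> A \<union> B \<and>
        ns' \<noteq> [] \<and> sorted_wrt (<) ns' \<and> length cs' = length ns' \<and> set cs' \<subseteq> A \<union> B \<and>
        reduce B cs \<in> F \<and> reduce B cs' = reduce B cs
        \<longrightarrow> \<chi> (subst_prod x w ns cs) = \<chi> (subst_prod x w ns' cs'))"
  using mainTheorem20_aux[OF assms] .

end
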